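(* Let $\mathbf{Q}^\star,\mathbf{Q},\mathbf{Q}_r,\mathbf{H}$ be as in the context, let $\lambda_j^\star$ be the $j$-th eigenvalue of $\mathbf{Q}^\star$, and define $\delta^\star=\min\{\min_{j\in[r-1]}|\lambda_j^\star-\lambda_{j+1}^\star|,\ \lambda_r^\star\}$. If $\|\mathbf{H}\|_2\le\delta^\star/2$, then $$\|\mathbf{Q}^\star-\mathbf{Q}_r\|_2\le O\!\left(\lambda_{r+1}^\star+\frac{\lambda_1^\star}{\delta^\star}\|\mathbf{H}\|_2\right).$$
   Context: $\mathbf{Q}^\star\in\mathbb{C}^{n\times n}$ is Hermitian positive semi-definite of rank $r^\star$, eigenvalues $\lambda_1^\star\ge\lambda_2^\star\ge\dots\ge 0$ (zero beyond the rank). $\mathbf{H}\in\mathbb{C}^{n\times n}$ is arbitrary (not necessarily Hermitian), $\mathbf{Q}=\mathbf{Q}^\star+\mathbf{H}$, and $\mathbf{Q}_r=\mathbf{V}_r\boldsymbol{\Sigma}_r\mathbf{V}_r^\dagger$ with $\boldsymbol{\Sigma}_r$ the diagonal matrix of the top-$r$ singular values of $\mathbf{Q}$ and $\mathbf{V}_r$ the corresponding left singular vectors. $\|\cdot\|_2$ is the spectral norm; $O(\cdot)$ hides an absolute constant. *)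

theory Defs
  imports "Jordan_Normal_Form.Matrix" Complex_Main
begin

definition adj :: "complex mat \<Rightarrow> complex mat" where
  "adj A = mat (dim_col A) (dim_row A) (\<lambda>(i,j). cnj (A $$ (j,i)))"

definition unitary_mat :: "nat \<Rightarrow> complex mat \<Rightarrow> bool" where
  "unitary_mat n U \<longleftrightarrow> U \<in> carrier_mat n n \<and> adj U * U = 1\<^sub>m n"

definition hermitian_mat :: "nat \<Rightarrow> complex mat \<Rightarrow> bool" where
  "hermitian_mat n A \<longleftrightarrow> A \<in> carrier_mat n n \<and> adj A = A"

definition psd_mat :: "nat \<Rightarrow> complex mat \<Rightarrow> bool" where
  "psd_mat n A \<longleftrightarrow> hermitian_mat n A \<and>
     (\<forall>v \<in> carrier_vec n. Re (\<Sum>i<n. cnj (v $ i) * (A *\<^sub>v v) $ i) \<ge> 0)"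

definition diag_real :: "nat \<Rightarrow> (nat \<Rightarrow> real) \<Rightarrow> complex mat" where
  "diag_real n d = mat n n (\<lambda>(i,j). if i = j then complex_of_real (d i) else 0)"

definition vnorm :: "complex vec \<Rightarrow> real" where
  "vnorm v = sqrt (\<Sum>i<dim_vec v. (cmod (v $ i))\<^sup>2)"

definition spec_norm :: "complex mat \<Rightarrow> real" where
  "spec_norm A = Sup {vnorm (A *\<^sub>v v) | v. v \<in> carrier_vec (dim_col A) \<and> vnorm v \<le> 1}"

(* Spectral decomposition A = U diag(lam) U^\<dagger>, U unitary, eigenvalues sorted
   lam 0 \<ge> lam 1 \<ge> ... \<ge> lam (n-1) (0-based; lam (j-1) is the paper's \<lambda>_j). *)
definition sorted_eig_decomp :: "nat \<Rightarrow> complex mat \<Rightarrow> complex mat \<Rightarrow> (nat \<Rightarrow> real) \<Rightarrow> bool" where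
  "sorted_eig_decomp n A U lam \<longleftrightarrow> unitary_mat n U \<and> A = U * diag_real n lam * adj U \<and>
     (\<forall>i j. i \<le> j \<and> j < n \<longrightarrow> lam j \<le> lam i)"

definition svd :: "nat \<Rightarrow> complex mat \<Rightarrow> complex mat \<Rightarrow> (nat \<Rightarrow> real) \<Rightarrow> complex mat \<Rightarrow> bool" where
  "svd n A U s W \<longleftrightarrow> unitary_mat n U \<and> unitary_mat n W \<and> A = U * diag_real n s * adj W \<and>
     (\<forall>i j. i \<le> j \<and> j < n \<longrightarrow> s j \<le> s i) \<and> (\<forall>i<n. 0 \<le> s i)"

definition first_cols :: "nat \<Rightarrow> nat \<Rightarrow> complex mat \<Rightarrow> complex mat" where
  "first_cols n r U = mat n r (\<lambda>(i,j). U $$ (i,j))"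

definition trunc_r :: "nat \<Rightarrow> nat \<Rightarrow> complex mat \<Rightarrow> (nat \<Rightarrow> real) \<Rightarrow> complex mat" where
  "trunc_r n r U s = first_cols n r U * diag_real r s * adj (first_cols n r U)"

end

theory Submission
  imports Defs "HOL-Analysis.L2_Norm" "Jordan_Normal_Form.Determinant"
begin


definition cinner :: "complex vec \<Rightarrow> complex vec \<Rightarrow> complex" where
  "cinner x y = (\<Sum>i<dim_vec x. cnj (x$i) * y$i)"

lemma vnorm_L2: "vnorm v = L2_set (\<lambda>i. cmod (v$i)) {..<dim_vec v}"
  unfolding vnorm_def L2_set_def by simp

lemma vnorm_nonneg: "0 \<le> vnorm v"
  unfolding vnorm_def by (simp add: sum_nonneg)

lemma vnorm_sq: "(vnorm v)^2 = (\<Sum>i<dim_vec v. (cmod (v$i))^2)"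
  unfolding vnorm_def by (simp add: sum_nonneg)

lemma vnorm_smult: "vnorm (c \<cdot>\<^sub>v v) = cmod c * vnorm v"
proof -
  have "(\<Sum>i<dim_vec v. (cmod ((c \<cdot>\<^sub>v v)$i))^2) = (cmod c)^2 * (\<Sum>i<dim_vec v. (cmod (v$i))^2)"
    by (simp add: sum_distrib_left norm_mult power_mult_distrib)
  then show ?thesis unfolding vnorm_def by (simp add: real_sqrt_mult)
qed

lemma vnorm_add: assumes "dim_vec y = dim_vec x"
  shows "vnorm (x + y) \<le> vnorm x + vnorm y"
proof -
  have "vnorm (x + y) = L2_set (\<lambda>i. cmod (x$i + y$i)) {..<dim_vec x}"
    unfolding vnorm_L2 using assms by (intro L2_set_cong) auto
  also have "\<dots> \<le> L2_set (\<lambda>i. cmod (x$i) + cmod (y$i)) {..<dim_vec x}"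
    by (rule L2_set_mono) (auto simp: norm_triangle_ineq)
  also have "\<dots> \<le> vnorm x + vnorm y"
    unfolding vnorm_L2 using assms L2_set_triangle_ineq by metis
  finally show ?thesis .
qed

lemma vnorm_uminus: "vnorm (- x) = vnorm x"
  unfolding vnorm_def by simp

lemma vnorm_diff: assumes "dim_vec y = dim_vec x"
  shows "vnorm (x - y) \<le> vnorm x + vnorm y"
proof -
  have "x - y = x + (- y)" using assms by (auto simp: minus_add_uminus_vec)
  then show ?thesis using vnorm_add[of "-y" x] assms vnorm_uminus by simp
qed

lemma vnorm_comp_le: "i < dim_vec v \<Longrightarrow> cmod (v$i) \<le> vnorm v"
proof -
  assume i: "i < dim_vec v"
  have "(cmod (v$i))^2 \<le> (\<Sum>j<dim_vec v. (cmod (v$j))^2)"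
    using i by (intro member_le_sum) auto
  then show ?thesis unfolding vnorm_def by (simp add: real_le_rsqrt)
qed

lemma vnorm_le_sum: "vnorm v \<le> (\<Sum>i<dim_vec v. cmod (v$i))"
  unfolding vnorm_L2 by (rule L2_set_le_sum) auto

lemma vnorm_zero_iff: "vnorm v = 0 \<longleftrightarrow> v = 0\<^sub>v (dim_vec v)"
proof
  assume "vnorm v = 0"
  then have "(\<Sum>i<dim_vec v. (cmod (v$i))^2) = 0" unfolding vnorm_def by simp
  then have "\<forall>i\<in>{..<dim_vec v}. (cmod (v$i))^2 = 0" by (subst (asm) sum_nonneg_eq_0_iff) auto
  then show "v = 0\<^sub>v (dim_vec v)" by (intro eq_vecI) auto
next
  assume "v = 0\<^sub>v (dim_vec v)" then show "vnorm v = 0" unfolding vnorm_def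
    by (metis (no_types, lifting) dim_vec index_zero_vec(1) lessThan_iff norm_zero power_zero_numeral real_sqrt_zero sum.neutral)
qed

lemma cinner_self: "cinner x x = complex_of_real ((vnorm x)^2)"
  unfolding cinner_def vnorm_sq of_real_sum
  by (rule sum.cong) (auto simp: complex_norm_square[symmetric] mult.commute simp del: of_real_power)

lemma cauchy_schwarz: assumes "dim_vec y = dim_vec x"
  shows "cmod (cinner x y) \<le> vnorm x * vnorm y"
proof -
  have "cmod (cinner x y) \<le> (\<Sum>i<dim_vec x. cmod (x$i) * cmod (y$i))"
    unfolding cinner_def by (rule order_trans[OF norm_sum]) (simp add: norm_mult)
  also have "\<dots> \<le> L2_set (\<lambda>i. cmod (x$i)) {..<dim_vec x} * L2_set (\<lambda>i. cmod (y$i)) {..<dim_vec x}"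
    using L2_set_mult_ineq[of "\<lambda>i. cmod (x$i)" "\<lambda>i. cmod (y$i)"] by simp
  finally show ?thesis unfolding vnorm_L2 using assms by simp
qed



lemma mv_index: assumes "A \<in> carrier_mat n m" "v \<in> carrier_vec m" "i < n"
  shows "(A *\<^sub>v v)$i = (\<Sum>j<m. A$$(i,j) * v$j)"
  using assms by (auto simp: scalar_prod_def atLeast0LessThan intro!: sum.cong)

lemma mm_index: assumes "A \<in> carrier_mat n k" "B \<in> carrier_mat k m" "i < n" "j < m"
  shows "(A * B)$$(i,j) = (\<Sum>l<k. A$$(i,l) * B$$(l,j))"
  using assms by (auto simp: scalar_prod_def atLeast0LessThan intro!: sum.cong)

lemma adj_carrier[simp]: "A \<in> carrier_mat n m \<Longrightarrow> adj A \<in> carrier_mat m n"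
  unfolding adj_def by auto

lemma adj_dims[simp]: "dim_row (adj A) = dim_col A" "dim_col (adj A) = dim_row A"
  unfolding adj_def by auto

lemma adj_index[simp]: "i < dim_col A \<Longrightarrow> j < dim_row A \<Longrightarrow> adj A $$ (i,j) = cnj (A $$ (j,i))"
  unfolding adj_def by auto

lemma adj_adj[simp]: "adj (adj A) = A"
  by (intro eq_matI) auto

lemma adj_mult: assumes "A \<in> carrier_mat n k" "B \<in> carrier_mat k m"
  shows "adj (A * B) = adj B * adj A"
proof (rule eq_matI)
  fix i j assume ij: "i < dim_row (adj B * adj A)" "j < dim_col (adj B * adj A)"
  then have i: "i < m" and j: "j < n" using assms by auto
  have "adj (A * B) $$ (i,j) = cnj ((A*B) $$ (j,i))" using assms i j by simp
  also have "\<dots> = cnj (\<Sum>l<k. A$$(j,l) * B$$(l,i))" using assms i j by (simp only: mm_index)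
  also have "\<dots> = (\<Sum>l<k. adj B $$ (i,l) * adj A $$ (l,j))" using assms i j by (auto simp: mult.commute)
  also have "\<dots> = (adj B * adj A) $$ (i,j)" using assms i j
    by (intro mm_index[symmetric]) auto
  finally show "adj (A * B) $$ (i,j) = (adj B * adj A) $$ (i,j)" .
qed (use assms in auto)

lemma adj_add: assumes "A \<in> carrier_mat n m" "B \<in> carrier_mat n m"
  shows "adj (A + B) = adj A + adj B"
  using assms by (intro eq_matI) auto

lemma adj_minus: assumes "A \<in> carrier_mat n m" "B \<in> carrier_mat n m"
  shows "adj (A - B) = adj A - adj B"
  using assms by (intro eq_matI) auto

lemma diag_carrier[simp]: "diag_real n d \<in> carrier_mat n n"
  unfolding diag_real_def by auto

lemma diag_index[simp]: "i < n \<Longrightarrow> j < n \<Longrightarrow> diag_real n d $$ (i,j) = (if i = j then complex_of_real (d i) else 0)"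
  unfolding diag_real_def by auto

lemma diag_dims[simp]: "dim_row (diag_real n d) = n" "dim_col (diag_real n d) = n"
  unfolding diag_real_def by auto

lemma adj_diag[simp]: "adj (diag_real n d) = diag_real n d"
  by (intro eq_matI) auto

lemma diag_mult_vec: assumes "v \<in> carrier_vec n" "i < n"
  shows "(diag_real n d *\<^sub>v v) $ i = complex_of_real (d i) * v $ i"
proof -
  have "(diag_real n d *\<^sub>v v) $ i = (\<Sum>j<n. (if i = j then complex_of_real (d i) else 0) * v$j)"
    using assms by (subst mv_index[of _ n n]) auto
  also have "\<dots> = (\<Sum>j<n. if i = j then complex_of_real (d i) * v$j else 0)"
    by (rule sum.cong) auto
  also have "\<dots> = complex_of_real (d i) * v $ i"
    using assms by simp
  finally show ?thesis .
qed

lemma cinner_adj: assumes "A \<in> carrier_mat n m" "x \<in> carrier_vec m" "y \<in> carrier_vec n"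
  shows "cinner (A *\<^sub>v x) y = cinner x (adj A *\<^sub>v y)"
proof -
  have "cinner (A *\<^sub>v x) y = (\<Sum>i<n. cnj (\<Sum>j<m. A$$(i,j) * x$j) * y$i)"
    unfolding cinner_def using assms by (auto simp: mv_index[OF assms(1,2)] simp del: index_mult_mat_vec)
  also have "\<dots> = (\<Sum>i<n. \<Sum>j<m. cnj (x$j) * (cnj (A$$(i,j)) * y$i))"
    by (simp add: sum_distrib_right sum_distrib_left mult.commute mult.left_commute)
  also have "\<dots> = (\<Sum>j<m. \<Sum>i<n. cnj (x$j) * (cnj (A$$(i,j)) * y$i))"
    by (rule sum.swap)
  also have "\<dots> = (\<Sum>j<m. cnj (x$j) * (\<Sum>i<n. cnj (A$$(i,j)) * y$i))"
    by (simp add: sum_distrib_left)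
  also have "\<dots> = cinner x (adj A *\<^sub>v y)"
    unfolding cinner_def using assms by (auto simp: mv_index[of "adj A" m n] simp del: index_mult_mat_vec intro!: sum.cong)
  finally show ?thesis .
qed

lemma unitary_right: assumes "U \<in> carrier_mat n n" "adj U * U = 1\<^sub>m n"
  shows "U * adj U = 1\<^sub>m n"
  using mat_mult_left_right_inverse[of "adj U" n U] assms by auto

lemma isometry: assumes "U \<in> carrier_mat n n" "adj U * U = 1\<^sub>m n" "x \<in> carrier_vec n"
  shows "vnorm (U *\<^sub>v x) = vnorm x"
proof -
  have "complex_of_real ((vnorm (U *\<^sub>v x))^2) = cinner (U *\<^sub>v x) (U *\<^sub>v x)"
    by (simp add: cinner_self)
  also have "\<dots> = cinner x (adj U *\<^sub>v (U *\<^sub>v x))"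
    using assms by (intro cinner_adj) auto
  also have "adj U *\<^sub>v (U *\<^sub>v x) = x"
    using assms by (metis adj_carrier assoc_mult_mat_vec one_mult_mat_vec)
  finally have "complex_of_real ((vnorm (U *\<^sub>v x))^2) = complex_of_real ((vnorm x)^2)"
    by (simp only: cinner_self)
  then have "(vnorm (U *\<^sub>v x))^2 = (vnorm x)^2" using of_real_eq_iff by blast
  then show ?thesis using vnorm_nonneg by (metis power2_eq_iff_nonneg)
qed



lemma vnorm_zero[simp]: "vnorm (0\<^sub>v n) = 0"
  unfolding vnorm_def by simp

lemma crude_bound: assumes A: "A \<in> carrier_mat n m" and x: "x \<in> carrier_vec m"
  shows "vnorm (A *\<^sub>v x) \<le> (\<Sum>i<n. \<Sum>j<m. cmod (A$$(i,j))) * vnorm x"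
proof -
  have "vnorm (A *\<^sub>v x) \<le> (\<Sum>i<n. cmod ((A *\<^sub>v x)$i))"
    using vnorm_le_sum[of "A *\<^sub>v x"] A by simp
  also have "\<dots> \<le> (\<Sum>i<n. \<Sum>j<m. cmod (A$$(i,j)) * vnorm x)"
  proof (rule sum_mono)
    fix i assume i: "i \<in> {..<n}"
    have "cmod ((A *\<^sub>v x)$i) = cmod (\<Sum>j<m. A$$(i,j) * x$j)"
      using i mv_index[OF A x, of i] by simp
    also have "\<dots> \<le> (\<Sum>j<m. cmod (A$$(i,j) * x$j))" by (rule norm_sum)
    also have "\<dots> \<le> (\<Sum>j<m. cmod (A$$(i,j)) * vnorm x)"
      using x by (intro sum_mono) (auto simp: norm_mult intro!: mult_left_mono vnorm_comp_le)
    finally show "cmod ((A *\<^sub>v x)$i) \<le> (\<Sum>j<m. cmod (A$$(i,j)) * vnorm x)" .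
  qed
  also have "\<dots> = (\<Sum>i<n. \<Sum>j<m. cmod (A$$(i,j))) * vnorm x"
    by (simp add: sum_distrib_right)
  finally show ?thesis .
qed

lemma spec_set_bdd: "bdd_above {vnorm (A *\<^sub>v v) | v. v \<in> carrier_vec (dim_col A) \<and> vnorm v \<le> 1}"
proof -
  let ?c = "(\<Sum>i<dim_row A. \<Sum>j<dim_col A. cmod (A$$(i,j)))"
  have c0: "0 \<le> ?c" by (intro sum_nonneg norm_ge_zero)
  show ?thesis
  proof (rule bdd_aboveI[of _ ?c], clarify)
    fix v assume v: "v \<in> carrier_vec (dim_col A)" "vnorm v \<le> 1"
    have "vnorm (A *\<^sub>v v) \<le> ?c * vnorm v"
      using crude_bound[of A "dim_row A" "dim_col A" v] v by auto
    also have "\<dots> \<le> ?c" using v c0 by (simp add: mult_left_le)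
    finally show "vnorm (A *\<^sub>v v) \<le> ?c" .
  qed
qed

lemma spec_nonneg: "0 \<le> spec_norm A"
proof -
  have "vnorm (A *\<^sub>v 0\<^sub>v (dim_col A)) \<in> {vnorm (A *\<^sub>v v) | v. v \<in> carrier_vec (dim_col A) \<and> vnorm v \<le> 1}"
    by force
  moreover have "A *\<^sub>v 0\<^sub>v (dim_col A) = 0\<^sub>v (dim_row A)"
    by (auto intro!: eq_vecI)
  then have "vnorm (A *\<^sub>v 0\<^sub>v (dim_col A)) = 0" by simp
  ultimately show ?thesis unfolding spec_norm_def using cSup_upper[OF _ spec_set_bdd[of A]]
    by fastforce
qed

lemma spec_ge: assumes x: "x \<in> carrier_vec (dim_col A)"
  shows "vnorm (A *\<^sub>v x) \<le> spec_norm A * vnorm x"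
proof (cases "vnorm x = 0")
  case True
  then have "x = 0\<^sub>v (dim_col A)" using vnorm_zero_iff x by auto
  then have "A *\<^sub>v x = 0\<^sub>v (dim_row A)" by (auto intro!: eq_vecI)
  then show ?thesis using True by simp
next
  case False
  then have pos: "vnorm x > 0" using vnorm_nonneg[of x] by simp
  define y where "y = complex_of_real (1 / vnorm x) \<cdot>\<^sub>v x"
  have y: "y \<in> carrier_vec (dim_col A)" using x unfolding y_def by auto
  have ny: "vnorm y = 1" unfolding y_def vnorm_smult using pos by (simp add: norm_divide)
  have "A *\<^sub>v y = complex_of_real (1 / vnorm x) \<cdot>\<^sub>v (A *\<^sub>v x)"
    unfolding y_def by (rule mult_mat_vec[of _ "dim_row A" "dim_col A"]) (use x in auto)
  then have "vnorm (A *\<^sub>v y) = vnorm (A *\<^sub>v x) / vnorm x"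
    using pos by (simp add: vnorm_smult norm_divide)
  moreover have "vnorm (A *\<^sub>v y) \<le> spec_norm A"
    unfolding spec_norm_def using y ny spec_set_bdd by (intro cSup_upper) auto
  ultimately show ?thesis using pos by (simp add: divide_le_eq mult.commute)
qed

lemma spec_le: assumes c: "0 \<le> c" and h: "\<And>x. x \<in> carrier_vec (dim_col A) \<Longrightarrow> vnorm (A *\<^sub>v x) \<le> c * vnorm x"
  shows "spec_norm A \<le> c"
  unfolding spec_norm_def
proof (rule cSup_least)
  show "{vnorm (A *\<^sub>v v) | v. v \<in> carrier_vec (dim_col A) \<and> vnorm v \<le> 1} \<noteq> {}"
  proof -
    have "0\<^sub>v (dim_col A) \<in> carrier_vec (dim_col A) \<and> vnorm (0\<^sub>v (dim_col A)) \<le> 1" by simp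
    then show ?thesis by blast
  qed
next
  fix t assume "t \<in> {vnorm (A *\<^sub>v v) | v. v \<in> carrier_vec (dim_col A) \<and> vnorm v \<le> 1}"
  then obtain v where v: "v \<in> carrier_vec (dim_col A)" "vnorm v \<le> 1" "t = vnorm (A *\<^sub>v v)" by auto
  have "t \<le> c * vnorm v" using h v by auto
  also have "\<dots> \<le> c" using v c by (simp add: mult_left_le)
  finally show "t \<le> c" .
qed

lemma spec_adj: assumes A: "A \<in> carrier_mat n n" and x: "x \<in> carrier_vec n"
  shows "vnorm (adj A *\<^sub>v x) \<le> spec_norm A * vnorm x"
proof -
  define y where "y = adj A *\<^sub>v x"
  have y: "y \<in> carrier_vec n" unfolding y_def by (rule mult_mat_vec_carrier[OF adj_carrier[OF A] x])
  have "(vnorm y)^2 = Re (cinner y y)" by (simp add: cinner_self)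
  also have "cinner y y = cinner x (adj (adj A) *\<^sub>v y)"
    unfolding y_def using A x y by (intro cinner_adj[of _ n n]) (auto simp: y_def)
  also have "Re (cinner x (adj (adj A) *\<^sub>v y)) \<le> cmod (cinner x (A *\<^sub>v y))"
    by (simp add: complex_Re_le_cmod)
  also have "\<dots> \<le> vnorm x * vnorm (A *\<^sub>v y)"
    using A x y by (intro cauchy_schwarz) auto
  also have "\<dots> \<le> vnorm x * (spec_norm A * vnorm y)"
    using A y by (intro mult_left_mono spec_ge vnorm_nonneg) auto
  finally have "(vnorm y)^2 \<le> (spec_norm A * vnorm x) * vnorm y" by (simp add: ac_simps)
  then have "vnorm y \<le> spec_norm A * vnorm x"
    using vnorm_nonneg[of y] by (cases "vnorm y = 0") (auto simp: power2_eq_square spec_nonneg vnorm_nonneg)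
  then show ?thesis unfolding y_def .
qed

lemma entry_bound: assumes A: "A \<in> carrier_mat n n" and i: "i < n" and j: "j < n"
  and h: "\<And>x. x \<in> carrier_vec n \<Longrightarrow> vnorm (A *\<^sub>v x) \<le> c * vnorm x"
  shows "cmod (A $$ (i,j)) \<le> c"
proof -
  have "(A *\<^sub>v unit_vec n j) $ i = A $$ (i,j)"
    using A i j by (simp add: mv_index[OF A] sum.delta cong: if_cong) 
  moreover have "vnorm (unit_vec n j) = 1"
  proof -
    have "(\<Sum>k<n. (cmod (unit_vec n j $ k))^2) = (\<Sum>k<n. if k = j then 1 else 0)"
      using j by (intro sum.cong) auto
    then show ?thesis unfolding vnorm_def using j by simp
  qed
  moreover have "cmod ((A *\<^sub>v unit_vec n j) $ i) \<le> vnorm (A *\<^sub>v unit_vec n j)"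
    using A i by (intro vnorm_comp_le) simp
  moreover have "vnorm (A *\<^sub>v unit_vec n j) \<le> c * vnorm (unit_vec n j)"
    using j by (intro h) simp
  ultimately show ?thesis by simp
qed



lemma carrier_mv_diag[simp]: "diag_real n d *\<^sub>v v \<in> carrier_vec n"
  by (rule carrier_vecI) simp

lemma carrier_mv_dim: "dim_row A = n \<Longrightarrow> A *\<^sub>v v \<in> carrier_vec n"
  by (rule carrier_vecI) simp

lemma kernel_lemma: assumes B: "(B :: complex mat) \<in> carrier_mat n n" and k: "k < n"
  shows "\<exists>c \<in> carrier_vec n. c \<noteq> 0\<^sub>v n \<and> (\<forall>j. k < j \<and> j < n \<longrightarrow> c$j = 0) \<and> (\<forall>i<k. (B *\<^sub>v c)$i = 0)"
proof -
  define r where "r i = vec n (\<lambda>j. if i < k then B$$(i,j) else if j = i then 1 else (0::complex))" for i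
  define A where "A = mat\<^sub>r n n (\<lambda>i. if i = k then 0\<^sub>v n else r i)"
  have rc: "r \<in> {0..<n} \<rightarrow> carrier_vec n" unfolding r_def by auto
  have "det A = 0" unfolding A_def by (rule det_row_0[OF k rc])
  moreover have A: "A \<in> carrier_mat n n" unfolding A_def by (rule mat_row_carrierI)
  ultimately have "\<exists>v. v \<in> carrier_vec n \<and> v \<noteq> 0\<^sub>v n \<and> A *\<^sub>v v = 0\<^sub>v n"
    using det_0_iff_vec_prod_zero[OF A] by blast
  then obtain c where c1: "c \<in> carrier_vec n" and c2: "c \<noteq> 0\<^sub>v n" and c3: "A *\<^sub>v c = 0\<^sub>v n"
    by blast
  have Ac: "(A *\<^sub>v c)$i = 0" if "i < n" for i using c3 that by simp
  have Aij: "A $$ (i,j) = (if i = k then 0 else r i $ j)" if "i < n" "j < n" for i j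
    unfolding A_def using that by simp
  have rowA: "(A *\<^sub>v c)$i = (\<Sum>j<n. A $$ (i,j) * c$j)" if "i < n" for i
    by (rule mv_index[OF A c1 that])
  have 1: "c$j = 0" if j: "k < j" "j < n" for j
  proof -
    have "(A *\<^sub>v c)$j = (\<Sum>l<n. (if l = j then c$l else 0))"
      unfolding rowA[OF j(2)]
    proof (rule sum.cong)
      fix l assume "l \<in> {..<n}"
      then show "A $$ (j,l) * c$l = (if l = j then c$l else 0)"
        using j by (simp add: Aij r_def)
    qed simp
    also have "\<dots> = c$j" using j by simp
    finally show ?thesis using Ac[OF j(2)] by simp
  qed
  have 2: "(B *\<^sub>v c)$i = 0" if i: "i < k" for i
  proof -
    have iN: "i < n" using i k by simp
    have "(B *\<^sub>v c)$i = (\<Sum>j<n. B$$(i,j) * c$j)" by (rule mv_index[OF B c1 iN])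
    also have "\<dots> = (A *\<^sub>v c)$i"
      unfolding rowA[OF iN]
    proof (rule sum.cong)
      fix l assume "l \<in> {..<n}"
      then show "B $$ (i,l) * c$l = A $$ (i,l) * c$l"
        using i iN by (simp add: Aij r_def)
    qed simp
    finally show ?thesis using Ac[OF iN] by simp
  qed
  show ?thesis using c1 c2 1 2 by blast
qed

lemma diag_norm_sq: assumes "v \<in> carrier_vec n"
  shows "(vnorm (diag_real n a *\<^sub>v v))^2 = (\<Sum>i<n. (a i)^2 * (cmod (v$i))^2)"
proof -
  have "(vnorm (diag_real n a *\<^sub>v v))^2 = (\<Sum>i<n. (cmod ((diag_real n a *\<^sub>v v)$i))^2)"
    unfolding vnorm_sq by simp
  also have "\<dots> = (\<Sum>i<n. (a i)^2 * (cmod (v$i))^2)"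
  proof (rule sum.cong)
    fix i assume "i \<in> {..<n}"
    then have "(diag_real n a *\<^sub>v v)$i = complex_of_real (a i) * v$i" using diag_mult_vec[OF assms] by simp
    then show "(cmod ((diag_real n a *\<^sub>v v)$i))^2 = (a i)^2 * (cmod (v$i))^2"
      by (simp add: norm_mult power_mult_distrib)
  qed simp
  finally show ?thesis .
qed

lemma diag_lower: assumes v: "v \<in> carrier_vec n" and t: "0 \<le> t"
  and h: "\<And>i. i < n \<Longrightarrow> v$i \<noteq> 0 \<Longrightarrow> t \<le> \<bar>a i\<bar>"
  shows "t * vnorm v \<le> vnorm (diag_real n a *\<^sub>v v)"
proof -
  have "(t * vnorm v)^2 = (\<Sum>i<n. t^2 * (cmod (v$i))^2)"
    using v by (simp add: power_mult_distrib vnorm_sq sum_distrib_left)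
  also have "\<dots> \<le> (\<Sum>i<n. (a i)^2 * (cmod (v$i))^2)"
  proof (rule sum_mono)
    fix i assume i: "i \<in> {..<n}"
    show "t^2 * (cmod (v$i))^2 \<le> (a i)^2 * (cmod (v$i))^2"
    proof (cases "v$i = 0")
      case False
      then have "t \<le> \<bar>a i\<bar>" using h i by auto
      then have "t^2 \<le> (a i)^2" using t by (metis abs_ge_self abs_le_square_iff abs_of_nonneg order_trans)
      then show ?thesis by (intro mult_right_mono) auto
    qed simp
  qed
  also have "\<dots> = (vnorm (diag_real n a *\<^sub>v v))^2" using diag_norm_sq[OF v] by simp
  finally show ?thesis using vnorm_nonneg by (metis power2_le_imp_le)
qed

lemma diag_upper: assumes v: "v \<in> carrier_vec n" and t: "0 \<le> t"
  and h: "\<And>i. i < n \<Longrightarrow> v$i \<noteq> 0 \<Longrightarrow> \<bar>a i\<bar> \<le> t"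
  shows "vnorm (diag_real n a *\<^sub>v v) \<le> t * vnorm v"
proof -
  have "(vnorm (diag_real n a *\<^sub>v v))^2 = (\<Sum>i<n. (a i)^2 * (cmod (v$i))^2)" using diag_norm_sq[OF v] by simp
  also have "\<dots> \<le> (\<Sum>i<n. t^2 * (cmod (v$i))^2)"
  proof (rule sum_mono)
    fix i assume i: "i \<in> {..<n}"
    show "(a i)^2 * (cmod (v$i))^2 \<le> t^2 * (cmod (v$i))^2"
    proof (cases "v$i = 0")
      case False
      then have "\<bar>a i\<bar> \<le> t" using h i by auto
      then have "(a i)^2 \<le> t^2" by (metis abs_le_square_iff abs_of_nonneg t)
      then show ?thesis by (intro mult_right_mono) auto
    qed simp
  qed
  also have "\<dots> = (t * vnorm v)^2"
    using v by (simp add: power_mult_distrib vnorm_sq sum_distrib_left)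
  finally show ?thesis using t vnorm_nonneg by (metis mult_nonneg_nonneg power2_le_imp_le)
qed

lemma vnorm_tri2: assumes "u \<in> carrier_vec n" "v \<in> carrier_vec n"
  shows "vnorm u \<le> vnorm v + vnorm (u - v)"
proof -
  have "u = v + (u - v)" using assms by auto
  then have "vnorm u = vnorm (v + (u - v))" by simp
  also have "\<dots> \<le> vnorm v + vnorm (u - v)" using assms by (intro vnorm_add) auto
  finally show ?thesis .
qed

lemma weyl_gen:
  assumes X: "X \<in> carrier_mat n n" "adj X * X = 1\<^sub>m n"
    and Y: "Y \<in> carrier_mat n n" "adj Y * Y = 1\<^sub>m n"
    and Z1: "Z1 \<in> carrier_mat n n" "adj Z1 * Z1 = 1\<^sub>m n"
    and Z2: "Z2 \<in> carrier_mat n n" "adj Z2 * Z2 = 1\<^sub>m n"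
    and k: "k < n"
    and amono: "\<And>i. i \<le> k \<Longrightarrow> a k \<le> a i" and ann: "0 \<le> a k"
    and bbd: "\<And>i. k \<le> i \<Longrightarrow> i < n \<Longrightarrow> \<bar>b i\<bar> \<le> b k"
    and h: "\<And>x. x \<in> carrier_vec n \<Longrightarrow>
       vnorm ((Z1 * diag_real n a * adj X) *\<^sub>v x - (Z2 * diag_real n b * adj Y) *\<^sub>v x) \<le> h * vnorm x"
  shows "a k \<le> b k + h"
proof -
  have B: "adj Y * X \<in> carrier_mat n n" using X Y by auto
  obtain c where c: "c \<in> carrier_vec n" "c \<noteq> 0\<^sub>v n" "\<And>j. k < j \<Longrightarrow> j < n \<Longrightarrow> c$j = 0"
    "\<And>i. i < k \<Longrightarrow> ((adj Y * X) *\<^sub>v c)$i = 0"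
    using kernel_lemma[OF B k] by blast
  define x where "x = X *\<^sub>v c"
  have x: "x \<in> carrier_vec n" unfolding x_def using X c by auto
  have nx: "vnorm x = vnorm c" unfolding x_def using isometry X c by auto
  have pos: "vnorm c > 0"
  proof (rule ccontr)
    assume "\<not> vnorm c > 0"
    then have "vnorm c = 0" using vnorm_nonneg[of c] by linarith
    then have "c = 0\<^sub>v (dim_vec c)" using vnorm_zero_iff[of c] by blast
    then show False using c(1,2) by auto
  qed
  have bk: "0 \<le> b k" using bbd[of k] k by auto
  have "(Z1 * diag_real n a * adj X) *\<^sub>v x = Z1 *\<^sub>v (diag_real n a *\<^sub>v c)"
  proof -
    have "adj X *\<^sub>v x = (adj X * X) *\<^sub>v c" unfolding x_def
      by (rule assoc_mult_mat_vec[symmetric, of _ n n _ n]) (use X c in auto)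
    then have "adj X *\<^sub>v x = c" using X c by simp
    have "(Z1 * diag_real n a * adj X) *\<^sub>v x = (Z1 * diag_real n a) *\<^sub>v (adj X *\<^sub>v x)"
      by (rule assoc_mult_mat_vec[of _ n n _ n]) (use X Z1 x mult_mat_vec_carrier[OF adj_carrier[OF X(1)] x] in auto)
    also have "\<dots> = Z1 *\<^sub>v (diag_real n a *\<^sub>v (adj X *\<^sub>v x))"
      by (rule assoc_mult_mat_vec[of _ n n _ n]) (use X Z1 x mult_mat_vec_carrier[OF adj_carrier[OF X(1)] x] in auto)
    finally show ?thesis using \<open>adj X *\<^sub>v x = c\<close> by simp
  qed
  then have n1: "vnorm ((Z1 * diag_real n a * adj X) *\<^sub>v x) = vnorm (diag_real n a *\<^sub>v c)"
    using isometry[OF Z1] c by auto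
  have l1: "a k * vnorm c \<le> vnorm (diag_real n a *\<^sub>v c)"
  proof (rule diag_lower[OF c(1) ann])
    fix i assume "i < n" "c$i \<noteq> 0"
    then have "i \<le> k" using c(3) by (meson not_le)
    then show "a k \<le> \<bar>a i\<bar>" using amono by (meson abs_ge_self order_trans)
  qed
  define y where "y = adj Y *\<^sub>v x"
  have y: "y \<in> carrier_vec n" unfolding y_def using Y by (intro carrier_mv_dim) auto
  have ny: "vnorm y = vnorm x"
  proof -
    have "adj (adj Y) * adj Y = 1\<^sub>m n" using unitary_right[OF Y] by simp
    then show ?thesis unfolding y_def using isometry[of "adj Y" n x] Y x by auto
  qed
  have "(Z2 * diag_real n b * adj Y) *\<^sub>v x = Z2 *\<^sub>v (diag_real n b *\<^sub>v y)"
  proof -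
    have "(Z2 * diag_real n b * adj Y) *\<^sub>v x = (Z2 * diag_real n b) *\<^sub>v (adj Y *\<^sub>v x)"
      by (rule assoc_mult_mat_vec[of _ n n _ n]) (use Y Z2 x mult_mat_vec_carrier[OF adj_carrier[OF Y(1)] x] in auto)
    also have "\<dots> = Z2 *\<^sub>v (diag_real n b *\<^sub>v (adj Y *\<^sub>v x))"
      by (rule assoc_mult_mat_vec[of _ n n _ n]) (use Y Z2 x mult_mat_vec_carrier[OF adj_carrier[OF Y(1)] x] in auto)
    finally show ?thesis unfolding y_def .
  qed
  then have n2: "vnorm ((Z2 * diag_real n b * adj Y) *\<^sub>v x) = vnorm (diag_real n b *\<^sub>v y)"
    using isometry[OF Z2] y by auto
  have yk: "y$i = 0" if "i < k" for i
  proof -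
    have "y = (adj Y * X) *\<^sub>v c" unfolding y_def x_def
      by (rule assoc_mult_mat_vec[symmetric, of _ n n _ n]) (use X Y c in auto)
    then show ?thesis using c(4) that by simp
  qed
  have u2: "vnorm (diag_real n b *\<^sub>v y) \<le> b k * vnorm y"
  proof (rule diag_upper[OF y bk])
    fix i assume "i < n" "y$i \<noteq> 0"
    then show "\<bar>b i\<bar> \<le> b k" using yk bbd by (meson not_le)
  qed
  have A1: "a k * vnorm c \<le> vnorm ((Z1 * diag_real n a * adj X) *\<^sub>v x)" using n1 l1 by simp
  have "vnorm ((Z1 * diag_real n a * adj X) *\<^sub>v x) \<le> vnorm ((Z2 * diag_real n b * adj Y) *\<^sub>v x)
      + vnorm ((Z1 * diag_real n a * adj X) *\<^sub>v x - (Z2 * diag_real n b * adj Y) *\<^sub>v x)"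
    using X Y Z1 Z2 x by (intro vnorm_tri2[of _ n] carrier_mv_dim) auto
  also have "\<dots> \<le> b k * vnorm c + h * vnorm c"
  proof (rule add_mono)
    show "vnorm ((Z2 * diag_real n b * adj Y) *\<^sub>v x) \<le> b k * vnorm c" using n2 u2 ny nx by simp
    show "vnorm ((Z1 * diag_real n a * adj X) *\<^sub>v x - (Z2 * diag_real n b * adj Y) *\<^sub>v x) \<le> h * vnorm c"
      using h[OF x] nx by simp
  qed
  finally have A2: "vnorm ((Z1 * diag_real n a * adj X) *\<^sub>v x) \<le> b k * vnorm c + h * vnorm c" .
  have "(b k + h) * vnorm c = b k * vnorm c + h * vnorm c" by (rule distrib_right)
  then have "a k * vnorm c \<le> (b k + h) * vnorm c" using A1 A2 by linarith
  then show ?thesis using pos by (rule mult_right_le_imp_le)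
qed



lemma geo: fixes l s L :: real
  assumes l: "0 \<le> l" and s: "0 < s" and sL: "s \<le> L"
  shows "(\<Sum>k<N. s * (L - s)^k / (l + L)^(Suc k)) = s / (l + s) * (1 - ((L - s) / (l + L))^N)"
proof -
  define x where "x = (L - s) / (l + L)"
  have lL: "l + L > 0" using l s sL by linarith
  have x1: "x \<noteq> 1" unfolding x_def using lL s l by (auto simp: field_simps)
  have "(\<Sum>k<N. s * (L - s)^k / (l + L)^(Suc k)) = (\<Sum>k<N. s / (l + L) * x^k)"
    unfolding x_def by (rule sum.cong) (auto simp: power_divide)
  also have "\<dots> = s / (l + L) * (\<Sum>k<N. x^k)" by (simp add: sum_distrib_left)
  also have "\<dots> = s / (l + L) * ((1 - x^N) / (1 - x))" using x1 by (simp add: sum_gp_strict)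
  also have "1 - x = (l + s) / (l + L)" unfolding x_def using lL by (simp add: field_simps)
  also have "s / (l + L) * ((1 - x^N) / ((l + s) / (l + L))) = s / (l + s) * (1 - x^N)"
  proof -
    have ls: "l + s > 0" using l s by linarith
    have "s / (l + L) * (y / ((l + s) / (l + L))) = s / (l + s) * y" for y
    proof -
      have a: "l + L \<noteq> 0" "l + s \<noteq> 0" using lL ls by auto
      have "s / (l + L) * (y / ((l + s) / (l + L))) = (s * y) * (l + L) / ((l + L) * (l + s))"
        by (simp add: divide_divide_eq_right)
      also have "\<dots> = s * y / (l + s)" using a by simp
      finally show ?thesis by simp
    qed
    then show ?thesis .
  qed
  finally show ?thesis unfolding x_def .
qed

lemma L2_sum_bound: fixes N :: nat
  shows   "L2_set (\<lambda>i. cmod ((\<Sum>k<N. f k i) + g i)) A \<le> (\<Sum>k<N. L2_set (\<lambda>i. cmod (f k i)) A) + L2_set (\<lambda>i. cmod (g i)) A"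
proof (induction N)
  case 0
  then show ?case by simp
next
  case (Suc N)
  have "L2_set (\<lambda>i. cmod ((\<Sum>k<Suc N. f k i) + g i)) A
      = L2_set (\<lambda>i. cmod (((\<Sum>k<N. f k i) + g i) + f N i)) A"
    by (simp add: ac_simps)
  also have "\<dots> \<le> L2_set (\<lambda>i. cmod ((\<Sum>k<N. f k i) + g i) + cmod (f N i)) A"
    by (rule L2_set_mono) (auto simp: norm_triangle_ineq)
  also have "\<dots> \<le> L2_set (\<lambda>i. cmod ((\<Sum>k<N. f k i) + g i)) A + L2_set (\<lambda>i. cmod (f N i)) A"
    by (rule L2_set_triangle_ineq)
  also have "\<dots> \<le> (\<Sum>k<N. L2_set (\<lambda>i. cmod (f k i)) A) + L2_set (\<lambda>i. cmod (g i)) A + L2_set (\<lambda>i. cmod (f N i)) A"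
    using Suc by simp
  also have "\<dots> = (\<Sum>k<Suc N. L2_set (\<lambda>i. cmod (f k i)) A) + L2_set (\<lambda>i. cmod (g i)) A"
    by simp
  finally show ?case .
qed

lemma vnorm_sum_bound: fixes N :: nat
  assumes w: "w \<in> carrier_vec n" and vs: "\<And>k. vs k \<in> carrier_vec n" and u: "u \<in> carrier_vec n"
  and eq: "\<And>i. i < n \<Longrightarrow> w$i = (\<Sum>k<N. vs k $ i) + u$i"
  shows "vnorm w \<le> (\<Sum>k<N. vnorm (vs k)) + vnorm u"
proof -
  have dw: "dim_vec w = n" using w by simp
  have du: "dim_vec u = n" using u by simp
  have dv: "dim_vec (vs k) = n" for k using vs[of k] by simp
  have "vnorm w = L2_set (\<lambda>i. cmod ((\<Sum>k<N. vs k $ i) + u$i)) {..<n}"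
    unfolding vnorm_L2 dw by (rule L2_set_cong) (auto simp: eq)
  also have "\<dots> \<le> (\<Sum>k<N. L2_set (\<lambda>i. cmod (vs k $ i)) {..<n}) + L2_set (\<lambda>i. cmod (u $ i)) {..<n}"
    by (rule L2_sum_bound)
  also have "\<dots> = (\<Sum>k<N. vnorm (vs k)) + vnorm u"
    unfolding vnorm_L2 dv du by simp
  finally show ?thesis .
qed



lemma schur_series:
  fixes K :: "complex mat" and lam s :: "nat \<Rightarrow> real"
  assumes K: "K \<in> carrier_mat n n" and kap: "0 \<le> \<kappa>"
    and Kb: "\<And>z. z \<in> carrier_vec n \<Longrightarrow> vnorm (K *\<^sub>v z) \<le> \<kappa> * vnorm z"
    and lam: "\<And>i. i < n \<Longrightarrow> 0 \<le> lam i"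
    and m: "0 < m" and mL: "m \<le> L"
    and sb: "\<And>j. j < n \<Longrightarrow> j < r \<Longrightarrow> m \<le> s j \<and> s j \<le> L"
    and T: "T = mat n n (\<lambda>(i,j). if j < r then K$$(i,j) * complex_of_real (s j / (lam i + s j)) else 0)"
    and y: "y \<in> carrier_vec n"
  shows "vnorm (T *\<^sub>v y) \<le> \<kappa> * (L / m) * vnorm y"
proof -
  define q where "q = (L - m) / L"
  have L0: "0 < L" using m mL by linarith
  have q0: "0 \<le> q" unfolding q_def using mL L0 by simp
  have q1: "q < 1" unfolding q_def using m L0 by (simp add: field_simps)
  have Tc: "T \<in> carrier_mat n n" unfolding T by simp
  have Tij: "T $$ (i,j) = (if j < r then K$$(i,j) * complex_of_real (s j / (lam i + s j)) else 0)"
    if "i < n" "j < n" for i j unfolding T using that by simp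
  have Kij: "cmod (K $$ (i,j)) \<le> \<kappa>" if "i < n" "j < n" for i j
    by (rule entry_bound[OF K that Kb])
  have main: "vnorm (T *\<^sub>v y) \<le> \<kappa> * (L / m) * vnorm y + real n * real n * \<kappa> * q^N * vnorm y" for N :: nat
  proof -
    define a where "a k i = 1 / (lam i + L)^(Suc k)" for k i
    define b where "b k j = (if j < r then s j * (L - s j)^k else 0)" for k j
    define vs where "vs k = diag_real n (a k) *\<^sub>v (K *\<^sub>v (diag_real n (b k) *\<^sub>v y))" for k
    define \<rho> where "\<rho> i j = (L - s j) / (lam i + L)" for i j
    define R where "R = mat n n (\<lambda>(i,j). T $$ (i,j) * complex_of_real ((\<rho> i j)^N))"
    have Rc: "R \<in> carrier_mat n n" unfolding R_def by simp
    have vsc: "vs k \<in> carrier_vec n" for k unfolding vs_def by simp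
    have Ryc: "R *\<^sub>v y \<in> carrier_vec n" using Rc y by simp
    have Tyc: "T *\<^sub>v y \<in> carrier_vec n" using Tc y by simp
    have entry: "T $$ (i,j) = (\<Sum>k<N. complex_of_real (a k i) * K$$(i,j) * complex_of_real (b k j)) + R $$ (i,j)"
      if ij: "i < n" "j < n" for i j
    proof (cases "j < r")
      case False
      then show ?thesis using ij by (simp add: Tij R_def b_def)
    next
      case True
      have sj: "m \<le> s j" "s j \<le> L" using sb[OF ij(2) True] by auto
      have li: "0 \<le> lam i" using lam ij by simp
      have g: "(\<Sum>k<N. a k i * b k j) = s j / (lam i + s j) * (1 - (\<rho> i j)^N)"
      proof -
        have "(\<Sum>k<N. a k i * b k j) = (\<Sum>k<N. s j * (L - s j)^k / (lam i + L)^(Suc k))"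
          unfolding a_def b_def using True by (intro sum.cong) auto
        also have "\<dots> = s j / (lam i + s j) * (1 - ((L - s j) / (lam i + L))^N)"
          using sj m by (intro geo li) auto
        finally show ?thesis unfolding \<rho>_def .
      qed
      have "(\<Sum>k<N. complex_of_real (a k i) * K$$(i,j) * complex_of_real (b k j))
          = K$$(i,j) * complex_of_real (\<Sum>k<N. a k i * b k j)"
        by (simp add: sum_distrib_left mult.commute mult.left_commute)
      also have "\<dots> = K$$(i,j) * complex_of_real (s j / (lam i + s j)) - K$$(i,j) * complex_of_real (s j / (lam i + s j)) * complex_of_real ((\<rho> i j)^N)"
      proof -
        have gen: "K$$(i,j) * complex_of_real (f * (1 - p)) = K$$(i,j) * complex_of_real f - K$$(i,j) * complex_of_real f * complex_of_real p" for f p :: real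
          by (simp add: algebra_simps)
        show ?thesis unfolding g by (rule gen)
      qed
      also have "\<dots> = T $$ (i,j) - R $$ (i,j)"
        using ij True by (simp add: Tij R_def)
      finally have X: "(\<Sum>k<N. complex_of_real (a k i) * K$$(i,j) * complex_of_real (b k j)) = T $$ (i,j) - R $$ (i,j)" .
      show ?thesis unfolding X by simp
    qed
    have eq: "(T *\<^sub>v y)$i = (\<Sum>k<N. vs k $ i) + (R *\<^sub>v y)$i" if i: "i < n" for i
    proof -
      have vsi: "vs k $ i = (\<Sum>j<n. complex_of_real (a k i) * K$$(i,j) * complex_of_real (b k j) * y$j)" for k
      proof -
        have Kv: "K *\<^sub>v (diag_real n (b k) *\<^sub>v y) \<in> carrier_vec n" using K by simp
        have "vs k $ i = complex_of_real (a k i) * (K *\<^sub>v (diag_real n (b k) *\<^sub>v y)) $ i"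
          unfolding vs_def by (rule diag_mult_vec[OF Kv i])
        also have "(K *\<^sub>v (diag_real n (b k) *\<^sub>v y)) $ i = (\<Sum>j<n. K$$(i,j) * (diag_real n (b k) *\<^sub>v y)$j)"
          by (rule mv_index[OF K _ i]) simp
        also have "\<dots> = (\<Sum>j<n. K$$(i,j) * (complex_of_real (b k j) * y$j))"
        proof (rule sum.cong)
          fix j assume "j \<in> {..<n}"
          then have "(diag_real n (b k) *\<^sub>v y)$j = complex_of_real (b k j) * y$j"
            using diag_mult_vec[OF y] by blast
          then show "K$$(i,j) * (diag_real n (b k) *\<^sub>v y)$j = K$$(i,j) * (complex_of_real (b k j) * y$j)"
            by simp
        qed simp
        finally show ?thesis by (simp add: sum_distrib_left mult.assoc)
      qed
      have "(T *\<^sub>v y)$i = (\<Sum>j<n. T$$(i,j) * y$j)" by (rule mv_index[OF Tc y i])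
      also have "\<dots> = (\<Sum>j<n. (\<Sum>k<N. complex_of_real (a k i) * K$$(i,j) * complex_of_real (b k j) * y$j) + R$$(i,j) * y$j)"
        by (rule sum.cong) (auto simp: entry[OF i] sum_distrib_right distrib_right)
      also have "\<dots> = (\<Sum>k<N. \<Sum>j<n. complex_of_real (a k i) * K$$(i,j) * complex_of_real (b k j) * y$j) + (\<Sum>j<n. R$$(i,j) * y$j)"
        by (simp add: sum.distrib sum.swap[of _ "{..<N}"])
      also have "\<dots> = (\<Sum>k<N. vs k $ i) + (R *\<^sub>v y)$i"
        by (simp add: vsi mv_index[OF Rc y i])
      finally show ?thesis .
    qed
    have tri: "vnorm (T *\<^sub>v y) \<le> (\<Sum>k<N. vnorm (vs k)) + vnorm (R *\<^sub>v y)"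
      by (rule vnorm_sum_bound[OF Tyc vsc Ryc eq])
    have vsb: "vnorm (vs k) \<le> \<kappa> * q^k * vnorm y" for k
    proof -
      have Kv: "K *\<^sub>v (diag_real n (b k) *\<^sub>v y) \<in> carrier_vec n" using K by simp
      have a_le: "\<bar>a k i\<bar> \<le> 1 / L^(Suc k)" if "i < n" for i
      proof -
        have "L^(Suc k) \<le> (lam i + L)^(Suc k)" using lam[OF that] L0 by (intro power_mono) auto
        then show ?thesis unfolding a_def using L0 lam[OF that]
          by (simp add: frac_le)
      qed
      have b_le: "\<bar>b k j\<bar> \<le> L * (L - m)^k" if "j < n" for j
      proof (cases "j < r")
        case True
        have sj: "m \<le> s j" "s j \<le> L" using sb[OF that True] by auto
        have "\<bar>s j * (L - s j)^k\<bar> = s j * (L - s j)^k" using sj m by simp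
        also have "\<dots> \<le> L * (L - m)^k"
          using sj m by (intro mult_mono power_mono) auto
        finally show ?thesis unfolding b_def using True by simp
      next
        case False
        then show ?thesis unfolding b_def using mL L0 by simp
      qed
      have "vnorm (vs k) \<le> 1 / L^(Suc k) * vnorm (K *\<^sub>v (diag_real n (b k) *\<^sub>v y))"
        unfolding vs_def by (rule diag_upper[OF Kv]) (use L0 a_le in auto)
      also have "\<dots> \<le> 1 / L^(Suc k) * (\<kappa> * vnorm (diag_real n (b k) *\<^sub>v y))"
        using Kb[of "diag_real n (b k) *\<^sub>v y"] L0 by (intro mult_left_mono) auto
      also have "\<dots> \<le> 1 / L^(Suc k) * (\<kappa> * (L * (L - m)^k * vnorm y))"
        using diag_upper[OF y, of "L * (L - m)^k" "b k"] b_le mL L0 kap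
        by (intro mult_left_mono) auto
      also have "\<dots> = \<kappa> * ((L - m)^k / L^k) * vnorm y" using L0 by (simp add: field_simps)
      also have "(L - m)^k / L^k = q^k" unfolding q_def by (simp add: power_divide)
      finally show ?thesis by simp
    qed
    have sumb: "(\<Sum>k<N. vnorm (vs k)) \<le> \<kappa> * (L / m) * vnorm y"
    proof -
      have s1: "(\<Sum>k<N. vnorm (vs k)) \<le> (\<Sum>k<N. \<kappa> * q^k * vnorm y)" by (intro sum_mono vsb)
      have s2: "(\<Sum>k<N. \<kappa> * q^k * vnorm y) = (\<kappa> * vnorm y) * (\<Sum>k<N. q^k)"
        by (simp add: sum_distrib_left mult.commute mult.left_commute)
      have s3: "(\<Sum>k<N. q^k) = (1 - q^N) / (1 - q)" using q1 by (simp add: sum_gp_strict)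
      have s4: "(1 - q^N) / (1 - q) \<le> 1 / (1 - q)" using q0 q1 by (simp add: divide_right_mono)
      have s5: "1 / (1 - q) = L / m" unfolding q_def using L0 m by (simp add: field_simps)
      have s6: "(\<kappa> * vnorm y) * (\<Sum>k<N. q^k) \<le> (\<kappa> * vnorm y) * (L / m)"
        using s3 s4 s5 kap vnorm_nonneg[of y] by (intro mult_left_mono) auto
      show ?thesis using s1 s2 s6 by (simp add: ac_simps)
    qed
    have Rb: "vnorm (R *\<^sub>v y) \<le> real n * real n * \<kappa> * q^N * vnorm y"
    proof -
      have Rij: "cmod (R $$ (i,j)) \<le> \<kappa> * q^N" if ij: "i < n" "j < n" for i j
      proof (cases "j < r")
        case False
        then show ?thesis using ij kap q0 by (simp add: R_def Tij)
      next
        case True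
        have sj: "m \<le> s j" "s j \<le> L" using sb[OF ij(2) True] by auto
        have li: "0 \<le> lam i" using lam ij by simp
        have f1: "0 \<le> s j / (lam i + s j)" "s j / (lam i + s j) \<le> 1" using sj m li by auto
        have r1: "0 \<le> \<rho> i j" "\<rho> i j \<le> q"
          unfolding \<rho>_def q_def using sj m li L0 by (auto simp: frac_le divide_nonneg_nonneg)
        have R1: "R $$ (i,j) = T $$ (i,j) * complex_of_real ((\<rho> i j)^N)" unfolding R_def using ij by simp
        have T1: "T $$ (i,j) = K$$(i,j) * complex_of_real (s j / (lam i + s j))" using Tij[OF ij] True by simp
        have "cmod (R $$ (i,j)) = cmod (K$$(i,j)) * \<bar>s j / (lam i + s j)\<bar> * \<bar>(\<rho> i j)^N\<bar>"
          unfolding R1 T1 norm_mult norm_of_real by simp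
        also have "\<dots> = cmod (K$$(i,j)) * (s j / (lam i + s j)) * (\<rho> i j)^N"
          using f1 r1 by (simp only: abs_of_nonneg zero_le_power)
        also have "\<dots> \<le> \<kappa> * 1 * q^N"
          using Kij[OF ij] f1 r1 kap by (intro mult_mono power_mono) auto
        finally show ?thesis by simp
      qed
      have "vnorm (R *\<^sub>v y) \<le> (\<Sum>i<n. \<Sum>j<n. cmod (R$$(i,j))) * vnorm y" by (rule crude_bound[OF Rc y])
      also have "\<dots> \<le> (\<Sum>i<n. \<Sum>j<n. \<kappa> * q^N) * vnorm y"
        using Rij by (intro mult_right_mono sum_mono vnorm_nonneg) auto
      also have "\<dots> = real n * real n * \<kappa> * q^N * vnorm y" by simp
      finally show ?thesis .
    qed
    show ?thesis using tri sumb Rb by linarith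
  qed
  show ?thesis
  proof (rule field_le_epsilon)
    fix e :: real assume e: "0 < e"
    define C where "C = real n * real n * \<kappa> * vnorm y"
    have C0: "0 \<le> C" unfolding C_def using kap vnorm_nonneg[of y] by simp
    obtain N where N: "q^N < e / (C + 1)" using real_arch_pow_inv[OF _ q1, of "e / (C + 1)"] e C0 by auto
    have "C * q^N \<le> (C + 1) * q^N" using q0 by (simp add: mult_right_mono)
    also have "\<dots> \<le> (C + 1) * (e / (C + 1))" using N C0 by (intro mult_left_mono) auto
    also have "\<dots> = e" using C0 by simp
    finally have "C * q^N \<le> e" .
    moreover have "real n * real n * \<kappa> * q^N * vnorm y = C * q^N" unfolding C_def by simp
    ultimately show "vnorm (T *\<^sub>v y) \<le> \<kappa> * (L / m) * vnorm y + e" using main[of N] by linarith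
  qed
qed



lemma mm_diag_right: assumes A: "A \<in> carrier_mat n n" and ij: "i < n" "j < n"
  shows "(A * diag_real n d) $$ (i,j) = A $$ (i,j) * complex_of_real (d j)"
proof -
  have "(A * diag_real n d) $$ (i,j) = (\<Sum>l<n. A$$(i,l) * diag_real n d $$ (l,j))"
    by (rule mm_index[OF A diag_carrier ij])
  also have "\<dots> = (\<Sum>l<n. if l = j then A$$(i,l) * complex_of_real (d j) else 0)"
    by (rule sum.cong) (use ij in auto)
  also have "\<dots> = A $$ (i,j) * complex_of_real (d j)" using ij by simp
  finally show ?thesis .
qed

lemma mm_diag_left: assumes A: "A \<in> carrier_mat n n" and ij: "i < n" "j < n"
  shows "(diag_real n d * A) $$ (i,j) = complex_of_real (d i) * A $$ (i,j)"
proof -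
  have "(diag_real n d * A) $$ (i,j) = (\<Sum>l<n. diag_real n d $$ (i,l) * A$$(l,j))"
    by (rule mm_index[OF diag_carrier A ij])
  also have "\<dots> = (\<Sum>l<n. if l = i then complex_of_real (d i) * A$$(l,j) else 0)"
    by (rule sum.cong) (use ij in auto)
  also have "\<dots> = complex_of_real (d i) * A $$ (i,j)" using ij by simp
  finally show ?thesis .
qed

lemma idx_add: "A \<in> carrier_mat n m \<Longrightarrow> B \<in> carrier_mat n m \<Longrightarrow> i < n \<Longrightarrow> j < m \<Longrightarrow> (A + B) $$ (i,j) = A $$ (i,j) + B $$ (i,j)"
  by auto

lemma idx_minus: "A \<in> carrier_mat n m \<Longrightarrow> B \<in> carrier_mat n m \<Longrightarrow> i < n \<Longrightarrow> j < m \<Longrightarrow> (A - B) $$ (i,j) = A $$ (i,j) - B $$ (i,j)"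
  by auto

lemma lin1: "(a::complex) + h = X \<Longrightarrow> h + Y = X \<Longrightarrow> a = Y"
  by (metis add.commute add_left_cancel)

lemma lin2: assumes "(x1::complex) + h1 = y1" "x2 + h2 = y2" shows "(x1 - x2) + (y2 - y1) = h2 - h1"
proof -
  have a: "x1 = y1 - h1" using assms(1) by (metis add_diff_cancel_right')
  have b: "x2 = y2 - h2" using assms(2) by (metis add_diff_cancel_right')
  show ?thesis unfolding a b by (simp add: algebra_simps)
qed

lemma key_identities:
  assumes U: "U \<in> carrier_mat n n" "adj U * U = 1\<^sub>m n"
    and V: "V \<in> carrier_mat n n" "adj V * V = 1\<^sub>m n"
    and W: "W \<in> carrier_mat n n" "adj W * W = 1\<^sub>m n"
    and H: "H \<in> carrier_mat n n"
    and QsE: "Qs = U * diag_real n lam * adj U"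
    and QE: "Qs + H = V * diag_real n s * adj W"
  shows "\<And>i j. i < n \<Longrightarrow> j < n \<Longrightarrow>
      (complex_of_real (lam i) + complex_of_real (s j)) * (adj U * (W - V))$$(i,j) = (adj U * (adj H * V - H * W))$$(i,j)"
    and "Qs = W * diag_real n s * adj V - adj H"
proof -
  define Lam where "Lam = diag_real n lam"
  define S where "S = diag_real n s"
  have Lc: "Lam \<in> carrier_mat n n" and Sc: "S \<in> carrier_mat n n" unfolding Lam_def S_def by auto
  have aU: "adj U \<in> carrier_mat n n" and aV: "adj V \<in> carrier_mat n n" and aW: "adj W \<in> carrier_mat n n"
    and aH: "adj H \<in> carrier_mat n n" using U V W H by auto
  have Qsc: "Qs \<in> carrier_mat n n" unfolding QsE by (rule mult_carrier_mat[OF mult_carrier_mat[OF U(1) diag_carrier] aU])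
  have adjQs: "adj Qs = Qs"
  proof -
    have "adj Qs = adj ((U * Lam) * adj U)" unfolding QsE Lam_def ..
    also have "\<dots> = adj (adj U) * adj (U * Lam)" by (rule adj_mult[OF mult_carrier_mat[OF U(1) Lc] aU])
    also have "adj (U * Lam) = adj Lam * adj U" by (rule adj_mult[OF U(1) Lc])
    also have "adj (adj U) * (adj Lam * adj U) = U * Lam * adj U"
      unfolding Lam_def adj_adj adj_diag by (rule assoc_mult_mat[symmetric, OF U(1) diag_carrier aU])
    finally show ?thesis unfolding QsE Lam_def .
  qed
  have E1: "Qs + adj H = W * S * adj V"
  proof -
    have "Qs + adj H = adj (Qs + H)" using adj_add[OF Qsc H] adjQs by simp
    also have "\<dots> = adj ((V * S) * adj W)" unfolding QE S_def ..
    also have "\<dots> = adj (adj W) * adj (V * S)" by (rule adj_mult[OF mult_carrier_mat[OF V(1) Sc] aW])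
    also have "adj (V * S) = adj S * adj V" by (rule adj_mult[OF V(1) Sc])
    also have "adj (adj W) * (adj S * adj V) = W * S * adj V"
      unfolding S_def adj_adj adj_diag by (rule assoc_mult_mat[symmetric, OF W(1) diag_carrier aV])
    finally show ?thesis .
  qed
  show "Qs = W * diag_real n s * adj V - adj H"
  proof (rule eq_matI)
    fix i j assume ij: "i < dim_row (W * diag_real n s * adj V - adj H)" "j < dim_col (W * diag_real n s * adj V - adj H)"
    then have i: "i < n" and j: "j < n" using W aV H by auto
    have "(Qs + adj H) $$ (i,j) = (W * S * adj V) $$ (i,j)" using E1 by simp
    then have "Qs $$ (i,j) + adj H $$ (i,j) = (W * S * adj V) $$ (i,j)" using idx_add[OF Qsc aH i j] by simp
    moreover have "(W * diag_real n s * adj V - adj H) $$ (i,j) = (W * S * adj V) $$ (i,j) - adj H $$ (i,j)"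
      unfolding S_def by (rule idx_minus[OF mult_carrier_mat[OF mult_carrier_mat[OF W(1) diag_carrier] aV] aH i j])
    ultimately show "Qs $$ (i,j) = (W * diag_real n s * adj V - adj H) $$ (i,j)"
      unfolding S_def by (metis add_diff_cancel_right')
  qed (use Qsc W aV aH in auto)
  have E2: "Qs * W + H * W = V * S"
  proof -
    have "Qs * W + H * W = (Qs + H) * W" by (rule add_mult_distrib_mat[symmetric, OF Qsc H W(1)])
    also have "\<dots> = V * S * adj W * W" unfolding QE S_def ..
    also have "\<dots> = V * S * (adj W * W)" by (rule assoc_mult_mat[OF mult_carrier_mat[OF V(1) Sc] aW W(1)])
    also have "\<dots> = V * S" using W V Sc by simp
    finally show ?thesis .
  qed
  have E3: "Qs * V + adj H * V = W * S"
  proof -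
    have "Qs * V + adj H * V = (Qs + adj H) * V" by (rule add_mult_distrib_mat[symmetric, OF Qsc aH V(1)])
    also have "\<dots> = W * S * adj V * V" unfolding E1 ..
    also have "\<dots> = W * S * (adj V * V)" by (rule assoc_mult_mat[OF mult_carrier_mat[OF W(1) Sc] aV V(1)])
    also have "\<dots> = W * S" using W V Sc by simp
    finally show ?thesis .
  qed
  have E5: "adj U * Qs = Lam * adj U"
  proof -
    have "adj U * Qs = adj U * ((U * Lam) * adj U)" unfolding QsE Lam_def ..
    also have "\<dots> = (adj U * (U * Lam)) * adj U" by (rule assoc_mult_mat[symmetric, OF aU mult_carrier_mat[OF U(1) Lc] aU])
    also have "adj U * (U * Lam) = (adj U * U) * Lam" by (rule assoc_mult_mat[symmetric, OF aU U(1) Lc])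
    also have "\<dots> = Lam" using U Lc by simp
    finally show ?thesis .
  qed
  define D where "D = adj U * (W - V)"
  define K where "K = adj U * (adj H * V - H * W)"
  have Dc: "D \<in> carrier_mat n n" unfolding D_def using aU W V by (simp add: minus_carrier_mat)
  have Kc: "K \<in> carrier_mat n n" unfolding K_def using aU H V W aH by (simp add: minus_carrier_mat)
  have QD: "Qs * (W - V) + (W - V) * S = adj H * V - H * W"
  proof (rule eq_matI)
    fix i j assume "i < dim_row (adj H * V - H * W)" "j < dim_col (adj H * V - H * W)"
    then have i: "i < n" and j: "j < n" using aH V H W by auto
    have QWc: "Qs * W \<in> carrier_mat n n" using Qsc W by simp
    have HWc: "H * W \<in> carrier_mat n n" using H W by simp
    have QVc: "Qs * V \<in> carrier_mat n n" using Qsc V by simp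
    have HVc: "adj H * V \<in> carrier_mat n n" using aH V by simp
    have WSc: "W * S \<in> carrier_mat n n" using W Sc by simp
    have VSc: "V * S \<in> carrier_mat n n" using V Sc by simp
    have WVc: "W - V \<in> carrier_mat n n" using W V by (simp add: minus_carrier_mat)
    have e2: "(Qs * W) $$ (i,j) + (H * W) $$ (i,j) = (V * S) $$ (i,j)"
      using arg_cong[OF E2, of "\<lambda>M. M $$ (i,j)"] idx_add[OF QWc HWc i j] by simp
    have e3: "(Qs * V) $$ (i,j) + (adj H * V) $$ (i,j) = (W * S) $$ (i,j)"
      using arg_cong[OF E3, of "\<lambda>M. M $$ (i,j)"] idx_add[OF QVc HVc i j] by simp
    have l1: "(Qs * (W - V)) $$ (i,j) = (Qs * W) $$ (i,j) - (Qs * V) $$ (i,j)"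
      unfolding mult_minus_distrib_mat[OF Qsc W(1) V(1)] by (rule idx_minus[OF QWc QVc i j])
    have l2: "((W - V) * S) $$ (i,j) = (W * S) $$ (i,j) - (V * S) $$ (i,j)"
      unfolding minus_mult_distrib_mat[OF W(1) V(1) Sc] by (rule idx_minus[OF WSc VSc i j])
    have "(Qs * (W - V) + (W - V) * S) $$ (i,j) = (Qs * (W - V)) $$ (i,j) + ((W - V) * S) $$ (i,j)"
      by (rule idx_add[OF mult_carrier_mat[OF Qsc WVc] mult_carrier_mat[OF WVc Sc] i j])
    also have "\<dots> = (adj H * V) $$ (i,j) - (H * W) $$ (i,j)"
      unfolding l1 l2 by (rule lin2[OF e2 e3])
    also have "\<dots> = (adj H * V - H * W) $$ (i,j)" by (rule idx_minus[OF HVc HWc i j, symmetric])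
    finally show "(Qs * (W - V) + (W - V) * S) $$ (i,j) = (adj H * V - H * W) $$ (i,j)" .
  qed (use aH V Qsc W Sc in auto)
  have Syl: "Lam * D + D * S = K"
  proof -
    have WV: "W - V \<in> carrier_mat n n" using W V by (simp add: minus_carrier_mat)
    have "K = adj U * (Qs * (W - V) + (W - V) * S)" unfolding K_def QD ..
    also have "\<dots> = adj U * (Qs * (W - V)) + adj U * ((W - V) * S)"
      by (rule mult_add_distrib_mat[OF aU mult_carrier_mat[OF Qsc WV] mult_carrier_mat[OF WV Sc]])
    also have "adj U * (Qs * (W - V)) = (adj U * Qs) * (W - V)" by (rule assoc_mult_mat[symmetric, OF aU Qsc WV])
    also have "\<dots> = Lam * adj U * (W - V)" unfolding E5 ..
    also have "\<dots> = Lam * D" unfolding D_def by (rule assoc_mult_mat[OF Lc aU WV])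
    also have "adj U * ((W - V) * S) = D * S" unfolding D_def by (rule assoc_mult_mat[symmetric, OF aU WV Sc])
    finally show ?thesis by simp
  qed
  fix i j assume i: "i < n" and j: "j < n"
  have "(Lam * D + D * S) $$ (i,j) = K $$ (i,j)" using Syl by simp
  then have "(Lam * D) $$ (i,j) + (D * S) $$ (i,j) = K $$ (i,j)"
    using idx_add[OF mult_carrier_mat[OF Lc Dc] mult_carrier_mat[OF Dc Sc] i j] by simp
  then have X: "complex_of_real (lam i) * D $$ (i,j) + D $$ (i,j) * complex_of_real (s j) = K $$ (i,j)"
    unfolding Lam_def S_def mm_diag_left[OF Dc i j] mm_diag_right[OF Dc i j] .
  have "(complex_of_real (lam i) + complex_of_real (s j)) * D $$ (i,j)
      = complex_of_real (lam i) * D $$ (i,j) + D $$ (i,j) * complex_of_real (s j)"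
    by (simp add: algebra_simps)
  then show "(complex_of_real (lam i) + complex_of_real (s j)) * (adj U * (W - V))$$(i,j) = (adj U * (adj H * V - H * W))$$(i,j)"
    using X unfolding D_def K_def by simp
qed



lemma trunc_eq: assumes V: "V \<in> carrier_mat n n" and r: "r \<le> n"
  shows "trunc_r n r V s = V * diag_real n (\<lambda>j. if j < r then s j else 0) * adj V"
proof (rule eq_matI)
  fix i j assume ij: "i < dim_row (V * diag_real n (\<lambda>j. if j < r then s j else 0) * adj V)"
    "j < dim_col (V * diag_real n (\<lambda>j. if j < r then s j else 0) * adj V)"
  then have i: "i < n" and j: "j < n" using V by auto
  define F where "F = first_cols n r V"
  have Fc: "F \<in> carrier_mat n r" unfolding F_def first_cols_def by simp
  have Fij: "F $$ (a,b) = V $$ (a,b)" if "a < n" "b < r" for a b unfolding F_def first_cols_def using that by simp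
  have aF: "adj F \<in> carrier_mat r n" using Fc by simp
  have FD: "F * diag_real r s \<in> carrier_mat n r" using Fc by simp
  have VD: "V * diag_real n (\<lambda>j. if j < r then s j else 0) \<in> carrier_mat n n" using V by simp
  have "trunc_r n r V s $$ (i,j) = ((F * diag_real r s) * adj F) $$ (i,j)" unfolding trunc_r_def F_def ..
  also have "\<dots> = (\<Sum>l<r. (F * diag_real r s) $$ (i,l) * adj F $$ (l,j))" by (rule mm_index[OF FD aF i j])
  also have "\<dots> = (\<Sum>l<r. V $$ (i,l) * complex_of_real (s l) * cnj (V $$ (j,l)))"
  proof (rule sum.cong)
    fix l assume l: "l \<in> {..<r}"
    then have lr: "l < r" by simp
    have "(F * diag_real r s) $$ (i,l) = (\<Sum>k<r. F$$(i,k) * diag_real r s $$ (k,l))" by (rule mm_index[OF Fc diag_carrier i lr])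
    also have "\<dots> = (\<Sum>k<r. if k = l then F$$(i,k) * complex_of_real (s l) else 0)"
      by (rule sum.cong) (use lr in auto)
    also have "\<dots> = F$$(i,l) * complex_of_real (s l)" using lr by simp
    finally have 1: "(F * diag_real r s) $$ (i,l) = V $$ (i,l) * complex_of_real (s l)" using Fij[OF i lr] by simp
    have 2: "adj F $$ (l,j) = cnj (V $$ (j,l))" using Fc lr j Fij[OF j lr] by simp
    show "(F * diag_real r s) $$ (i,l) * adj F $$ (l,j) = V $$ (i,l) * complex_of_real (s l) * cnj (V $$ (j,l))"
      unfolding 1 2 ..
  qed simp
  also have "\<dots> = (\<Sum>l<n. V $$ (i,l) * complex_of_real (if l < r then s l else 0) * cnj (V $$ (j,l)))"
  proof -
    have "(\<Sum>l<n. V $$ (i,l) * complex_of_real (if l < r then s l else 0) * cnj (V $$ (j,l)))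
        = (\<Sum>l\<in>{..<n}. if l \<in> {..<r} then V $$ (i,l) * complex_of_real (s l) * cnj (V $$ (j,l)) else 0)"
      by (rule sum.cong) auto
    also have "\<dots> = (\<Sum>l\<in>{..<n} \<inter> {..<r}. V $$ (i,l) * complex_of_real (s l) * cnj (V $$ (j,l)))"
      by (rule sum.inter_restrict[symmetric]) simp
    also have "{..<n} \<inter> {..<r} = {..<r}" using r by auto
    finally show ?thesis by simp
  qed
  also have "\<dots> = (\<Sum>l<n. (V * diag_real n (\<lambda>j. if j < r then s j else 0)) $$ (i,l) * adj V $$ (l,j))"
  proof (rule sum.cong)
    fix l assume "l \<in> {..<n}"
    then have l: "l < n" by simp
    show "V $$ (i,l) * complex_of_real (if l < r then s l else 0) * cnj (V $$ (j,l)) =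
        (V * diag_real n (\<lambda>j. if j < r then s j else 0)) $$ (i,l) * adj V $$ (l,j)"
      using mm_diag_right[OF V i l, of "\<lambda>j. if j < r then s j else 0"] V l j by simp
  qed simp
  also have "\<dots> = (V * diag_real n (\<lambda>j. if j < r then s j else 0) * adj V) $$ (i,j)"
    by (rule mm_index[symmetric, OF VD adj_carrier[OF V] i j])
  finally show "trunc_r n r V s $$ (i,j) = (V * diag_real n (\<lambda>j. if j < r then s j else 0) * adj V) $$ (i,j)" .
qed (use V in \<open>auto simp: trunc_r_def first_cols_def\<close>)

lemma lam_nonneg:
  assumes psd: "psd_mat n Qs" and U: "U \<in> carrier_mat n n" "adj U * U = 1\<^sub>m n"
    and QsE: "Qs = U * diag_real n lam * adj U" and i: "i < n"
  shows "0 \<le> lam i"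
proof -
  define e :: "complex vec" where "e = unit_vec n i"
  define v where "v = U *\<^sub>v e"
  have ec: "e \<in> carrier_vec n" unfolding e_def by simp
  have vc: "v \<in> carrier_vec n" unfolding v_def using U ec by simp
  have aU: "adj U \<in> carrier_mat n n" using U by simp
  have ne: "vnorm e = 1"
  proof -
    have "(\<Sum>k<n. (cmod (e $ k))^2) = (\<Sum>k<n. if k = i then 1 else 0)"
      unfolding e_def using i by (intro sum.cong) auto
    then show ?thesis unfolding vnorm_def e_def using i by simp
  qed
  have nv: "vnorm v = 1" unfolding v_def using isometry[OF U ec] ne by simp
  have Le: "diag_real n lam *\<^sub>v e = complex_of_real (lam i) \<cdot>\<^sub>v e"
  proof (rule eq_vecI)
    fix k assume "k < dim_vec (complex_of_real (lam i) \<cdot>\<^sub>v e)"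
    then have k: "k < n" unfolding e_def by simp
    show "(diag_real n lam *\<^sub>v e) $ k = (complex_of_real (lam i) \<cdot>\<^sub>v e) $ k"
      using diag_mult_vec[OF ec k, of lam] k i unfolding e_def by auto
  qed (simp add: e_def)
  have "Qs *\<^sub>v v = (U * diag_real n lam) *\<^sub>v (adj U *\<^sub>v v)"
    unfolding QsE by (rule assoc_mult_mat_vec[OF mult_carrier_mat[OF U(1) diag_carrier] aU vc])
  also have "adj U *\<^sub>v v = (adj U * U) *\<^sub>v e" unfolding v_def by (rule assoc_mult_mat_vec[symmetric, OF aU U(1) ec])
  also have "\<dots> = e" using U ec by simp
  also have "(U * diag_real n lam) *\<^sub>v e = U *\<^sub>v (diag_real n lam *\<^sub>v e)" by (rule assoc_mult_mat_vec[OF U(1) diag_carrier ec])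
  also have "\<dots> = complex_of_real (lam i) \<cdot>\<^sub>v v" unfolding Le v_def by (rule mult_mat_vec[OF U(1) ec])
  finally have Qv: "Qs *\<^sub>v v = complex_of_real (lam i) \<cdot>\<^sub>v v" .
  have "(\<Sum>k<n. cnj (v $ k) * (Qs *\<^sub>v v) $ k) = cinner v (Qs *\<^sub>v v)" unfolding cinner_def using vc by simp
  also have "\<dots> = complex_of_real (lam i) * cinner v v"
    unfolding Qv cinner_def using vc by (simp add: sum_distrib_left mult.left_commute)
  also have "\<dots> = complex_of_real (lam i)" unfolding cinner_self nv by simp
  finally have "Re (\<Sum>k<n. cnj (v $ k) * (Qs *\<^sub>v v) $ k) = lam i" by simp
  moreover have "Re (\<Sum>k<n. cnj (v $ k) * (Qs *\<^sub>v v) $ k) \<ge> 0" using psd vc unfolding psd_mat_def by blast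
  ultimately show ?thesis by simp
qed



lemma decomp:
  assumes U: "U \<in> carrier_mat n n" "adj U * U = 1\<^sub>m n"
    and V: "V \<in> carrier_mat n n" and W: "W \<in> carrier_mat n n" and H: "H \<in> carrier_mat n n"
    and x: "x \<in> carrier_vec n"
    and Qid: "Qs = W * diag_real n s * adj V - adj H"
    and ssum: "\<And>j. s j = sr j + sp j"
  shows "(Qs - V * diag_real n sr * adj V) *\<^sub>v x
     = W *\<^sub>v (diag_real n sp *\<^sub>v (adj V *\<^sub>v x)) + U *\<^sub>v ((adj U * (W - V) * diag_real n sr) *\<^sub>v (adj V *\<^sub>v x)) - adj H *\<^sub>v x"
proof -
  define z where "z = adj V *\<^sub>v x"
  have aV: "adj V \<in> carrier_mat n n" and aU: "adj U \<in> carrier_mat n n" and aH: "adj H \<in> carrier_mat n n"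
    using U V H by auto
  have zc: "z \<in> carrier_vec n" unfolding z_def by (rule mult_mat_vec_carrier[OF aV x])
  have Src: "diag_real n sr *\<^sub>v z \<in> carrier_vec n" by simp
  have Spc: "diag_real n sp *\<^sub>v z \<in> carrier_vec n" by simp
  define a where "a = W *\<^sub>v (diag_real n sr *\<^sub>v z)"
  define b where "b = W *\<^sub>v (diag_real n sp *\<^sub>v z)"
  define c where "c = V *\<^sub>v (diag_real n sr *\<^sub>v z)"
  define e where "e = adj H *\<^sub>v x"
  have ac: "a \<in> carrier_vec n" unfolding a_def by (rule mult_mat_vec_carrier[OF W Src])
  have bc: "b \<in> carrier_vec n" unfolding b_def by (rule mult_mat_vec_carrier[OF W Spc])
  have cc: "c \<in> carrier_vec n" unfolding c_def by (rule mult_mat_vec_carrier[OF V Src])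
  have ec: "e \<in> carrier_vec n" unfolding e_def by (rule mult_mat_vec_carrier[OF aH x])
  have WSV: "W * diag_real n s * adj V \<in> carrier_mat n n" by (rule mult_carrier_mat[OF mult_carrier_mat[OF W diag_carrier] aV])
  have VSV: "V * diag_real n sr * adj V \<in> carrier_mat n n" by (rule mult_carrier_mat[OF mult_carrier_mat[OF V diag_carrier] aV])
  have Qsc: "Qs \<in> carrier_mat n n" unfolding Qid by (rule minus_carrier_mat[OF aH])
  have S1: "(W * diag_real n s * adj V) *\<^sub>v x = W *\<^sub>v (diag_real n s *\<^sub>v z)"
  proof -
    have "(W * diag_real n s * adj V) *\<^sub>v x = (W * diag_real n s) *\<^sub>v z"
      unfolding z_def by (rule assoc_mult_mat_vec[OF mult_carrier_mat[OF W diag_carrier] aV x])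
    also have "\<dots> = W *\<^sub>v (diag_real n s *\<^sub>v z)" by (rule assoc_mult_mat_vec[OF W diag_carrier zc])
    finally show ?thesis .
  qed
  have S2: "diag_real n s *\<^sub>v z = diag_real n sr *\<^sub>v z + diag_real n sp *\<^sub>v z"
  proof (rule eq_vecI)
    fix i assume "i < dim_vec (diag_real n sr *\<^sub>v z + diag_real n sp *\<^sub>v z)"
    then have i: "i < n" by simp
    show "(diag_real n s *\<^sub>v z) $ i = (diag_real n sr *\<^sub>v z + diag_real n sp *\<^sub>v z) $ i"
      using i diag_mult_vec[OF zc i, of s] diag_mult_vec[OF zc i, of sr] diag_mult_vec[OF zc i, of sp] ssum[of i]
      by (simp add: algebra_simps)
  qed simp
  have S3: "W *\<^sub>v (diag_real n s *\<^sub>v z) = a + b"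
    unfolding S2 a_def b_def by (rule mult_add_distrib_mat_vec[OF W Src Spc])
  have S4: "(V * diag_real n sr * adj V) *\<^sub>v x = c"
  proof -
    have "(V * diag_real n sr * adj V) *\<^sub>v x = (V * diag_real n sr) *\<^sub>v z"
      unfolding z_def by (rule assoc_mult_mat_vec[OF mult_carrier_mat[OF V diag_carrier] aV x])
    also have "\<dots> = c" unfolding c_def by (rule assoc_mult_mat_vec[OF V diag_carrier zc])
    finally show ?thesis .
  qed
  have S5: "U *\<^sub>v ((adj U * (W - V) * diag_real n sr) *\<^sub>v z) = a - c"
  proof -
    have WV: "W - V \<in> carrier_mat n n" using W V by (simp add: minus_carrier_mat)
    have wc: "(W - V) *\<^sub>v (diag_real n sr *\<^sub>v z) \<in> carrier_vec n" by (rule mult_mat_vec_carrier[OF WV Src])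
    have "(adj U * (W - V) * diag_real n sr) *\<^sub>v z = (adj U * (W - V)) *\<^sub>v (diag_real n sr *\<^sub>v z)"
      by (rule assoc_mult_mat_vec[OF mult_carrier_mat[OF aU WV] diag_carrier zc])
    also have "\<dots> = adj U *\<^sub>v ((W - V) *\<^sub>v (diag_real n sr *\<^sub>v z))"
      by (rule assoc_mult_mat_vec[OF aU WV Src])
    finally have "U *\<^sub>v ((adj U * (W - V) * diag_real n sr) *\<^sub>v z) = U *\<^sub>v (adj U *\<^sub>v ((W - V) *\<^sub>v (diag_real n sr *\<^sub>v z)))"
      by simp
    also have "\<dots> = (U * adj U) *\<^sub>v ((W - V) *\<^sub>v (diag_real n sr *\<^sub>v z))"
      by (rule assoc_mult_mat_vec[symmetric, OF U(1) aU wc])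
    also have "U * adj U = 1\<^sub>m n" by (rule unitary_right[OF U])
    also have "1\<^sub>m n *\<^sub>v ((W - V) *\<^sub>v (diag_real n sr *\<^sub>v z)) = (W - V) *\<^sub>v (diag_real n sr *\<^sub>v z)"
      using wc by simp
    also have "\<dots> = a - c" unfolding a_def c_def by (rule minus_mult_distrib_mat_vec[OF W V Src])
    finally show ?thesis .
  qed
  have L1: "(Qs - V * diag_real n sr * adj V) *\<^sub>v x = Qs *\<^sub>v x - c"
    using minus_mult_distrib_mat_vec[OF Qsc VSV x] S4 by simp
  have L2: "Qs *\<^sub>v x = (a + b) - e"
    unfolding Qid e_def using minus_mult_distrib_mat_vec[OF WSV aH x] S1 S3 by simp
  show ?thesis unfolding L1 L2 S5[unfolded z_def] b_def[unfolded z_def, symmetric] e_def[symmetric]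
  proof (rule eq_vecI)
    fix i assume "i < dim_vec (b + (a - c) - e)"
    then have i: "i < n" using ec by simp
    show "(a + b - e - c) $ i = (b + (a - c) - e) $ i"
      using i ac bc cc ec by simp
  qed (use ac bc cc ec in simp)
qed



lemma add_mv_diff: fixes A B :: "complex mat" assumes A: "A \<in> carrier_mat n n" and B: "B \<in> carrier_mat n n" and x: "x \<in> carrier_vec n"
  shows "vnorm ((A + B) *\<^sub>v x - A *\<^sub>v x) = vnorm (B *\<^sub>v x)"
    and "vnorm (A *\<^sub>v x - (A + B) *\<^sub>v x) = vnorm (B *\<^sub>v x)"
proof -
  have e: "(A + B) *\<^sub>v x = A *\<^sub>v x + B *\<^sub>v x" by (rule add_mult_distrib_mat_vec[OF A B x])
  have ac: "A *\<^sub>v x \<in> carrier_vec n" by (rule mult_mat_vec_carrier[OF A x])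
  have bc: "B *\<^sub>v x \<in> carrier_vec n" by (rule mult_mat_vec_carrier[OF B x])
  have 1: "(A + B) *\<^sub>v x - A *\<^sub>v x = B *\<^sub>v x" unfolding e
    by (rule eq_vecI) (use ac bc A B in auto)
  have 2: "A *\<^sub>v x - (A + B) *\<^sub>v x = - (B *\<^sub>v x)" unfolding e
    by (rule eq_vecI) (use ac bc A B in auto)
  show "vnorm ((A + B) *\<^sub>v x - A *\<^sub>v x) = vnorm (B *\<^sub>v x)" unfolding 1 ..
  show "vnorm (A *\<^sub>v x - (A + B) *\<^sub>v x) = vnorm (B *\<^sub>v x)" unfolding 2 by (rule vnorm_uminus)
qed

lemma vnorm_3: assumes "b \<in> carrier_vec n" "u \<in> carrier_vec n" "e \<in> carrier_vec n"
  shows "vnorm (b + u - e) \<le> vnorm b + vnorm u + vnorm e"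
proof -
  have "vnorm (b + u - e) \<le> vnorm (b + u) + vnorm e" using assms by (intro vnorm_diff) auto
  also have "vnorm (b + u) \<le> vnorm b + vnorm u" using assms by (intro vnorm_add) auto
  finally show ?thesis by simp
qed

lemma main_bound:
  assumes r1: "1 \<le> r" and rn: "r \<le> n"
    and U: "U \<in> carrier_mat n n" "adj U * U = 1\<^sub>m n"
    and V: "V \<in> carrier_mat n n" "adj V * V = 1\<^sub>m n"
    and W: "W \<in> carrier_mat n n" "adj W * W = 1\<^sub>m n"
    and H: "H \<in> carrier_mat n n"
    and QsE: "Qs = U * diag_real n lam * adj U"
    and QE: "Qs + H = V * diag_real n s * adj W"
    and lsort: "\<And>i j. i \<le> j \<Longrightarrow> j < n \<Longrightarrow> lam j \<le> lam i"
    and lnn: "\<And>i. i < n \<Longrightarrow> 0 \<le> lam i"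
    and ssort: "\<And>i j. i \<le> j \<Longrightarrow> j < n \<Longrightarrow> s j \<le> s i"
    and snn: "\<And>i. i < n \<Longrightarrow> 0 \<le> s i"
    and d0: "0 \<le> d" and dl: "d \<le> lam (r - 1)" and hd: "spec_norm H \<le> d / 2"
  shows "spec_norm (Qs - trunc_r n r V s) \<le> 8 * ((if r < n then lam r else 0) + lam 0 / d * spec_norm H)"
proof -
  define h where "h = spec_norm H"
  define lr where "lr = (if r < n then lam r else 0)"
  define sr' where "sr' = (if r < n then s r else 0)"
  define sr where "sr j = (if j < r then s j else 0)" for j
  define sp where "sp j = (if j < r then 0 else s j)" for j
  define Lam where "Lam = diag_real n lam"
  define S where "S = diag_real n s"
  have h0: "0 \<le> h" unfolding h_def by (rule spec_nonneg)
  have hd': "h \<le> d / 2" using hd unfolding h_def .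
  have n0: "0 < n" using r1 rn by simp
  have aU: "adj U \<in> carrier_mat n n" and aV: "adj V \<in> carrier_mat n n" and aW: "adj W \<in> carrier_mat n n"
    and aH: "adj H \<in> carrier_mat n n" using U V W H by auto
  have Hx: "vnorm (H *\<^sub>v x) \<le> h * vnorm x" if "x \<in> carrier_vec n" for x
    unfolding h_def by (rule spec_ge) (use H that in simp)
  have aHx: "vnorm (adj H *\<^sub>v x) \<le> h * vnorm x" if "x \<in> carrier_vec n" for x
    unfolding h_def by (rule spec_adj[OF H that])
  have Qsc: "Qs \<in> carrier_mat n n" unfolding QsE by (rule mult_carrier_mat[OF mult_carrier_mat[OF U(1) diag_carrier] aU])
  note KI = key_identities[OF U V W H QsE QE]
  have weyl_up: "s k \<le> lam k + h" if k: "k < n" for k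
  proof (rule weyl_gen[OF W U V U k])
    show "\<And>i. i \<le> k \<Longrightarrow> s k \<le> s i" using ssort k by simp
    show "0 \<le> s k" using snn k by simp
    show "\<And>i. k \<le> i \<Longrightarrow> i < n \<Longrightarrow> \<bar>lam i\<bar> \<le> lam k" using lsort lnn by simp
    fix x :: "complex vec" assume x: "x \<in> carrier_vec n"
    have "vnorm ((V * diag_real n s * adj W) *\<^sub>v x - (U * diag_real n lam * adj U) *\<^sub>v x) = vnorm (H *\<^sub>v x)"
      unfolding QE[symmetric] QsE[symmetric] by (rule add_mv_diff(1)[OF Qsc H x])
    then show "vnorm ((V * diag_real n s * adj W) *\<^sub>v x - (U * diag_real n lam * adj U) *\<^sub>v x) \<le> h * vnorm x"
      using Hx[OF x] by simp
  qed
  have weyl_lo: "lam k \<le> s k + h" if k: "k < n" for k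
  proof (rule weyl_gen[OF U W U V k])
    show "\<And>i. i \<le> k \<Longrightarrow> lam k \<le> lam i" using lsort k by simp
    show "0 \<le> lam k" using lnn k by simp
    show "\<And>i. k \<le> i \<Longrightarrow> i < n \<Longrightarrow> \<bar>s i\<bar> \<le> s k" using ssort snn by simp
    fix x :: "complex vec" assume x: "x \<in> carrier_vec n"
    have "vnorm ((U * diag_real n lam * adj U) *\<^sub>v x - (V * diag_real n s * adj W) *\<^sub>v x) = vnorm (H *\<^sub>v x)"
      unfolding QE[symmetric] QsE[symmetric] by (rule add_mv_diff(2)[OF Qsc H x])
    then show "vnorm ((U * diag_real n lam * adj U) *\<^sub>v x - (V * diag_real n s * adj W) *\<^sub>v x) \<le> h * vnorm x"
      using Hx[OF x] by simp
  qed
  have sr'0: "0 \<le> sr'" unfolding sr'_def using snn by simp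
  have sr'b: "sr' \<le> lr + h" unfolding sr'_def lr_def using weyl_up h0 by simp
  have lr0: "0 \<le> lr" unfolding lr_def using lnn by simp
  define K where "K = adj U * (adj H * V - H * W)"
  define Tm where "Tm = adj U * (W - V) * diag_real n sr"
  have WV: "W - V \<in> carrier_mat n n" using W V by (simp add: minus_carrier_mat)
  have Kc: "K \<in> carrier_mat n n" unfolding K_def
    by (rule mult_carrier_mat[OF aU minus_carrier_mat[OF mult_carrier_mat[OF H W(1)]]])
  have Dc: "adj U * (W - V) \<in> carrier_mat n n" by (rule mult_carrier_mat[OF aU WV])
  have Tmc: "Tm \<in> carrier_mat n n" unfolding Tm_def by (rule mult_carrier_mat[OF Dc diag_carrier])
  have Kb: "vnorm (K *\<^sub>v z) \<le> (2 * h) * vnorm z" if z: "z \<in> carrier_vec n" for z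
  proof -
    have HVc: "adj H * V \<in> carrier_mat n n" using aH V by simp
    have HWc: "H * W \<in> carrier_mat n n" using H W by simp
    have p: "(adj H * V) *\<^sub>v z = adj H *\<^sub>v (V *\<^sub>v z)" by (rule assoc_mult_mat_vec[OF aH V(1) z])
    have q: "(H * W) *\<^sub>v z = H *\<^sub>v (W *\<^sub>v z)" by (rule assoc_mult_mat_vec[OF H W(1) z])
    have Vz: "V *\<^sub>v z \<in> carrier_vec n" by (rule mult_mat_vec_carrier[OF V(1) z])
    have Wz: "W *\<^sub>v z \<in> carrier_vec n" by (rule mult_mat_vec_carrier[OF W(1) z])
    have wc: "(adj H * V - H * W) *\<^sub>v z \<in> carrier_vec n"
      by (rule mult_mat_vec_carrier[OF minus_carrier_mat[OF HWc] z])
    have uu: "adj (adj U) * adj U = 1\<^sub>m n" using unitary_right[OF U] by simp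
    have "K *\<^sub>v z = adj U *\<^sub>v ((adj H * V - H * W) *\<^sub>v z)" unfolding K_def
      by (rule assoc_mult_mat_vec[OF aU minus_carrier_mat[OF HWc] z])
    then have "vnorm (K *\<^sub>v z) = vnorm ((adj H * V - H * W) *\<^sub>v z)"
      using isometry[OF aU uu wc] by simp
    also have "(adj H * V - H * W) *\<^sub>v z = adj H *\<^sub>v (V *\<^sub>v z) - H *\<^sub>v (W *\<^sub>v z)"
      unfolding p[symmetric] q[symmetric] by (rule minus_mult_distrib_mat_vec[OF HVc HWc z])
    also have "vnorm (adj H *\<^sub>v (V *\<^sub>v z) - H *\<^sub>v (W *\<^sub>v z)) \<le> vnorm (adj H *\<^sub>v (V *\<^sub>v z)) + vnorm (H *\<^sub>v (W *\<^sub>v z))"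
      by (rule vnorm_diff) (use H aH in simp)
    also have "\<dots> \<le> h * vnorm (V *\<^sub>v z) + h * vnorm (W *\<^sub>v z)"
      using aHx[OF Vz] Hx[OF Wz] by simp
    also have "\<dots> = (2 * h) * vnorm z" using isometry[OF V z] isometry[OF W z] by simp
    finally show ?thesis .
  qed
  have Tm_eq: "Tm = mat n n (\<lambda>(i,j). if j < r then K$$(i,j) * complex_of_real (s j / (lam i + s j)) else 0)"
  proof (rule eq_matI)
    fix i j assume "i < dim_row (mat n n (\<lambda>(i,j). if j < r then K$$(i,j) * complex_of_real (s j / (lam i + s j)) else 0))"
      "j < dim_col (mat n n (\<lambda>(i,j). if j < r then K$$(i,j) * complex_of_real (s j / (lam i + s j)) else 0))"
    then have i: "i < n" and j: "j < n" by auto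
    have Tij: "Tm $$ (i,j) = (adj U * (W - V)) $$ (i,j) * complex_of_real (sr j)"
      unfolding Tm_def by (rule mm_diag_right[OF Dc i j])
    have syl: "(complex_of_real (lam i) + complex_of_real (s j)) * (adj U * (W - V)) $$ (i,j) = K $$ (i,j)"
      unfolding K_def by (rule KI(1)[OF i j])
    show "Tm $$ (i,j) = mat n n (\<lambda>(i,j). if j < r then K$$(i,j) * complex_of_real (s j / (lam i + s j)) else 0) $$ (i,j)"
    proof (cases "j < r")
      case False
      then show ?thesis using i j Tij by (simp add: sr_def)
    next
      case True
      have li: "0 \<le> lam i" and sj: "0 \<le> s j" using lnn[OF i] snn[OF j] .
      show ?thesis
      proof (cases "lam i + s j = 0")
        case True
        then have "s j = 0" using li sj by linarith
        then show ?thesis using i j Tij \<open>j < r\<close> by (simp add: sr_def)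
      next
        case False
        then have nz: "complex_of_real (lam i) + complex_of_real (s j) \<noteq> 0"
          by (metis of_real_add of_real_eq_0_iff)
        have "(adj U * (W - V)) $$ (i,j) = K $$ (i,j) / (complex_of_real (lam i) + complex_of_real (s j))"
          using syl nz by (simp add: field_simps)
        then have "Tm $$ (i,j) = K $$ (i,j) * (complex_of_real (s j) / (complex_of_real (lam i) + complex_of_real (s j)))"
          using Tij \<open>j < r\<close> by (simp add: sr_def)
        then show ?thesis using i j \<open>j < r\<close> by simp
      qed
    qed
  qed (use U in \<open>auto simp: Tm_def\<close>)
  define \<beta> where "\<beta> = (if 0 < d then 2 * h * (s 0 / s (r - 1)) else 0)"
  have Tb: "vnorm (Tm *\<^sub>v z) \<le> \<beta> * vnorm z" if z: "z \<in> carrier_vec n" for z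
  proof (cases "0 < d")
    case True
    have r1n: "r - 1 < n" using r1 rn by simp
    have m: "0 < s (r - 1)" using weyl_lo[OF r1n] dl hd' True by linarith
    have mL: "s (r - 1) \<le> s 0" using ssort[of 0 "r - 1"] r1n by simp
    have sb: "s (r - 1) \<le> s j \<and> s j \<le> s 0" if "j < n" "j < r" for j
      using ssort[of j "r - 1"] ssort[of 0 j] that r1n by simp
    have "vnorm (Tm *\<^sub>v z) \<le> (2 * h) * (s 0 / s (r - 1)) * vnorm z"
      by (rule schur_series[OF Kc _ Kb lnn m mL sb Tm_eq z]) (use h0 in auto)
    then show ?thesis unfolding \<beta>_def using True by simp
  next
    case False
    then have hz: "h = 0" using d0 hd' h0 by linarith
    have Kz: "K $$ (i,j) = 0" if "i < n" "j < n" for i j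
      using entry_bound[OF Kc that, of 0] Kb hz by simp
    have "vnorm (Tm *\<^sub>v z) \<le> (\<Sum>i<n. \<Sum>j<n. cmod (Tm$$(i,j))) * vnorm z" by (rule crude_bound[OF Tmc z])
    also have "(\<Sum>i<n. \<Sum>j<n. cmod (Tm$$(i,j))) = 0"
      by (intro sum.neutral ballI) (simp add: Tm_eq Kz)
    finally show ?thesis unfolding \<beta>_def using False by simp
  qed
  have \<beta>0: "0 \<le> \<beta>"
  proof -
    have "r - 1 < n" using r1 rn by simp
    then have "0 \<le> s (r - 1)" using snn by simp
    moreover have "0 \<le> s 0" using snn n0 by simp
    ultimately show ?thesis unfolding \<beta>_def using h0 by (auto intro!: divide_nonneg_nonneg)
  qed
  have Qid: "Qs = W * diag_real n s * adj V - adj H" by (rule KI(2))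
  have tr: "trunc_r n r V s = V * diag_real n sr * adj V" unfolding sr_def by (rule trunc_eq[OF V(1) rn])
  have ssum: "s j = sr j + sp j" for j unfolding sr_def sp_def by simp
  have bound: "vnorm ((Qs - trunc_r n r V s) *\<^sub>v x) \<le> (sr' + \<beta> + h) * vnorm x" if x: "x \<in> carrier_vec n" for x
  proof -
    define z where "z = adj V *\<^sub>v x"
    have zc: "z \<in> carrier_vec n" unfolding z_def by (rule mult_mat_vec_carrier[OF aV x])
    have uv: "adj (adj V) * adj V = 1\<^sub>m n" using unitary_right[OF V] by simp
    have nz: "vnorm z = vnorm x" unfolding z_def by (rule isometry[OF aV uv x])
    have eq: "(Qs - trunc_r n r V s) *\<^sub>v x = W *\<^sub>v (diag_real n sp *\<^sub>v z) + U *\<^sub>v (Tm *\<^sub>v z) - adj H *\<^sub>v x"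
      unfolding tr z_def Tm_def by (rule decomp[OF U V(1) W(1) H x Qid ssum])
    have c1: "W *\<^sub>v (diag_real n sp *\<^sub>v z) \<in> carrier_vec n" by (rule mult_mat_vec_carrier[OF W(1)]) simp
    have c2: "U *\<^sub>v (Tm *\<^sub>v z) \<in> carrier_vec n" by (rule mult_mat_vec_carrier[OF U(1) mult_mat_vec_carrier[OF Tmc zc]])
    have c3: "adj H *\<^sub>v x \<in> carrier_vec n" by (rule mult_mat_vec_carrier[OF aH x])
    have b1: "vnorm (W *\<^sub>v (diag_real n sp *\<^sub>v z)) \<le> sr' * vnorm x"
    proof -
      have "vnorm (W *\<^sub>v (diag_real n sp *\<^sub>v z)) = vnorm (diag_real n sp *\<^sub>v z)" by (rule isometry[OF W]) simp
      also have "\<dots> \<le> sr' * vnorm z"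
      proof (rule diag_upper[OF zc sr'0])
        fix j assume j: "j < n"
        show "\<bar>sp j\<bar> \<le> sr'"
        proof (cases "j < r")
          case True then show ?thesis unfolding sp_def using sr'0 by simp
        next
          case False
          then have "r < n" "r \<le> j" using j by auto
          then show ?thesis unfolding sp_def sr'_def using False ssort[of r j] snn[OF j] j by simp
        qed
      qed
      finally show ?thesis unfolding nz .
    qed
    have b2: "vnorm (U *\<^sub>v (Tm *\<^sub>v z)) \<le> \<beta> * vnorm x"
      using isometry[OF U mult_mat_vec_carrier[OF Tmc zc]] Tb[OF zc] nz by simp
    have b3: "vnorm (adj H *\<^sub>v x) \<le> h * vnorm x" by (rule aHx[OF x])
    have "vnorm ((Qs - trunc_r n r V s) *\<^sub>v x) \<le> vnorm (W *\<^sub>v (diag_real n sp *\<^sub>v z)) + vnorm (U *\<^sub>v (Tm *\<^sub>v z)) + vnorm (adj H *\<^sub>v x)"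
      unfolding eq by (rule vnorm_3[OF c1 c2 c3])
    also have "\<dots> \<le> sr' * vnorm x + \<beta> * vnorm x + h * vnorm x" using b1 b2 b3 by linarith
    also have "\<dots> = (sr' + \<beta> + h) * vnorm x" by (simp add: algebra_simps)
    finally show ?thesis .
  qed
  have trc: "trunc_r n r V s \<in> carrier_mat n n" unfolding tr
    by (rule mult_carrier_mat[OF mult_carrier_mat[OF V(1) diag_carrier] aV])
  have dimc: "dim_col (Qs - trunc_r n r V s) = n" using trc by simp
  have sn: "spec_norm (Qs - trunc_r n r V s) \<le> sr' + \<beta> + h"
    by (rule spec_le) (use sr'0 \<beta>0 h0 bound dimc in auto)
  have fin: "sr' + \<beta> + h \<le> 8 * (lr + lam 0 / d * h)"
  proof (cases "0 < d")
    case False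
    then have hz: "h = 0" using d0 hd' h0 by linarith
    then show ?thesis unfolding \<beta>_def using False sr'b lr0 by simp
  next
    case True
    have r1n: "r - 1 < n" using r1 rn by simp
    have l0d: "d \<le> lam 0" using lsort[of 0 "r - 1"] r1n dl by simp
    have m: "d / 2 \<le> s (r - 1)" using weyl_lo[OF r1n] dl hd' by linarith
    have L: "s 0 \<le> lam 0 + h" using weyl_up n0 by simp
    have s00: "0 \<le> s 0" using snn n0 by simp
    have q1: "s 0 / s (r - 1) \<le> (lam 0 + h) / (d / 2)"
      using L m s00 True by (intro frac_le) auto
    have \<beta>b: "\<beta> \<le> 2 * h * ((lam 0 + h) / (d / 2))"
    proof -
      have "2 * h * (s 0 / s (r - 1)) \<le> 2 * h * ((lam 0 + h) / (d / 2))"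
        by (rule mult_left_mono[OF q1]) (use h0 in simp)
      then show ?thesis unfolding \<beta>_def using True by simp
    qed
    have e1: "2 * h * ((lam 0 + h) / (d / 2)) = 4 * (lam 0 / d * h) + 4 * (h / d * h)"
      using True by (simp add: field_simps)
    have e2: "h / d * h \<le> h / 2"
    proof -
      have "h / d \<le> 1 / 2" using hd' True by (simp add: field_simps)
      then show ?thesis using h0 by (metis mult_right_mono times_divide_eq_left mult_1 mult.commute)
    qed
    have e3: "h \<le> lam 0 / d * h"
    proof -
      have "1 \<le> lam 0 / d" using l0d True by simp
      then show ?thesis using h0 by (metis mult_right_mono mult_1)
    qed
    have "sr' + \<beta> + h \<le> (lr + h) + (4 * (lam 0 / d * h) + 4 * (h / d * h)) + h"
      using sr'b \<beta>b e1 by linarith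
    also have "\<dots> \<le> lr + 8 * (lam 0 / d * h)" using e2 e3 by linarith
    also have "\<dots> \<le> 8 * (lr + lam 0 / d * h)" using lr0 by simp
    finally show ?thesis .
  qed
  show ?thesis using sn fin unfolding h_def lr_def by linarith
qed



theorem lemma11:
  "\<exists>C>0. \<forall>(n::nat) (r::nat) Qs H U lam V s W.
     1 \<le> r \<longrightarrow> r \<le> n \<longrightarrow>
     psd_mat n Qs \<longrightarrow> H \<in> carrier_mat n n \<longrightarrow>
     sorted_eig_decomp n Qs U lam \<longrightarrow>
     svd n (Qs + H) V s W \<longrightarrow>
     (let ls = (\<lambda>j. if j \<le> n then lam (j - 1) else 0);
          del = Min ({\<bar>ls j - ls (j+1)\<bar> | j. 1 \<le> j \<and> j \<le> r - 1} \<union> {ls r})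
      in spec_norm H \<le> del / 2 \<longrightarrow>
         spec_norm (Qs - trunc_r n r V s) \<le> C * (ls (r+1) + ls 1 / del * spec_norm H))"
proof (rule exI[of _ 8], intro conjI allI impI)
  show "(0::real) < 8" by simp
  fix n r :: nat and Qs H U lam V s W
  assume r1: "1 \<le> r" and rn: "r \<le> n" and psd: "psd_mat n Qs" and H: "H \<in> carrier_mat n n"
    and eig: "sorted_eig_decomp n Qs U lam" and sv: "svd n (Qs + H) V s W"
  define ls where "ls = (\<lambda>j. if j \<le> n then lam (j - 1) else 0)"
  define A where "A = {\<bar>ls j - ls (j+1)\<bar> | j. 1 \<le> j \<and> j \<le> r - 1}"
  define del where "del = Min (A \<union> {ls r})"
  have U: "U \<in> carrier_mat n n" "adj U * U = 1\<^sub>m n" and QsE: "Qs = U * diag_real n lam * adj U"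
    and lsort: "\<And>i j. i \<le> j \<Longrightarrow> j < n \<Longrightarrow> lam j \<le> lam i"
    using eig unfolding sorted_eig_decomp_def unitary_mat_def by auto
  have V: "V \<in> carrier_mat n n" "adj V * V = 1\<^sub>m n" and W: "W \<in> carrier_mat n n" "adj W * W = 1\<^sub>m n"
    and QE: "Qs + H = V * diag_real n s * adj W"
    and ssort: "\<And>i j. i \<le> j \<Longrightarrow> j < n \<Longrightarrow> s j \<le> s i" and snn: "\<And>i. i < n \<Longrightarrow> 0 \<le> s i"
    using sv unfolding svd_def unitary_mat_def by auto
  have lnn: "\<And>i. i < n \<Longrightarrow> 0 \<le> lam i" by (rule lam_nonneg[OF psd U QsE])
  have ls1: "ls 1 = lam 0" unfolding ls_def using r1 rn by simp
  have lsr: "ls r = lam (r - 1)" unfolding ls_def using rn by simp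
  have lsr1: "ls (r + 1) = (if r < n then lam r else 0)" unfolding ls_def by auto
  have finA: "finite A"
  proof -
    have "A = (\<lambda>j. \<bar>ls j - ls (j+1)\<bar>) ` {1..r-1}" unfolding A_def by auto
    then show ?thesis by simp
  qed
  have fin: "finite (A \<union> {ls r})" using finA by simp
  have del_le: "del \<le> lam (r - 1)" unfolding del_def lsr[symmetric] using fin by (intro Min_le) auto
  have lr0: "0 \<le> ls r" unfolding lsr using lnn r1 rn by simp
  have del0: "0 \<le> del"
  proof -
    have "del \<in> A \<union> {ls r}" unfolding del_def using fin by (intro Min_in) auto
    then show ?thesis unfolding A_def using lr0 by auto
  qed
  show "let ls = (\<lambda>j. if j \<le> n then lam (j - 1) else 0);
          del = Min ({\<bar>ls j - ls (j+1)\<bar> | j. 1 \<le> j \<and> j \<le> r - 1} \<union> {ls r})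
      in spec_norm H \<le> del / 2 \<longrightarrow>
         spec_norm (Qs - trunc_r n r V s) \<le> 8 * (ls (r+1) + ls 1 / del * spec_norm H)"
    unfolding Let_def ls_def[symmetric] A_def[symmetric] del_def[symmetric]
  proof
    assume hd: "spec_norm H \<le> del / 2"
    have "spec_norm (Qs - trunc_r n r V s) \<le> 8 * ((if r < n then lam r else 0) + lam 0 / del * spec_norm H)"
      by (rule main_bound[OF r1 rn U V W H QsE QE lsort lnn ssort snn del0 del_le hd])
    then show "spec_norm (Qs - trunc_r n r V s) \<le> 8 * (ls (r+1) + ls 1 / del * spec_norm H)"
      unfolding ls1 lsr1 .
  qed
qed


end
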